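(* In the network setting of the context, suppose the vector $\gamma=(\gamma_1,\dots,\gamma_I)$ is not identically zero. Then there exists a constant control $\bar u=(\bar u^c,\bar u^s)\in\mathbb U$ with the following property: for every $m\ge1$ there exist a diagonal matrix $Q$ with positive diagonal entries, a function $\mathcal V\in C^2(\mathbb R^I)$ with $\mathcal V(x)=(x^{\mathsf T}Qx)^{m/2}$ for $|x|\ge1$, and constants $\kappa_0,\kappa_1>0$ such that $$\mathcal L^{\bar u}\mathcal V(x)\le\kappa_0-\kappa_1\mathcal V(x)\qquad\forall x\in\mathbb R^I.$$ Consequently the diffusion under $\bar u$ is geometrically ergodic and its invariant probability distribution has finite moments of all orders.
   Context: Network setting. $\mathcal I=\{1,\dots,I\}$, $\mathcal J=\{1,\dots,J\}$; $\mathcal G$ a bipartite tree on $\mathcal I\cup\mathcal J$ with edges $i\sim j$; $\mathcal J(i)=\{j:i\sim j\}$. Constants $\lambda_i>0$, $\gamma_i\ge0$, $\ell_i\in\mathbb R$; $\mu_{ij}>0$ if $i\sim j$, $\mu_{ij}=0$ otherwise. $e$ = all-ones vector, $a^\pm$ positive/negative parts. For $e\cdot\alpha=e\cdot\beta$, $G(\alpha,\beta)$ is the unique $\psi\in\mathbb R^{I\times J}$ with row sums $\alpha_i$, column sums $\beta_j$, and $\psi_{ij}=0$ for $i\not\sim j$. $\mathbb U=\{u=(u^c,u^s)\in\mathbb R^I_+\times\mathbb R^J_+:e\cdot u^c=e\cdot u^s=1\}$; $\hat G[u](x)=G(x-(e\cdot x)^+u^c,-(e\cdot x)^-u^s)$;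 drift $b_i(x,u)=-\sum_{j\in\mathcal J(i)}\mu_{ij}\hat G_{ij}[u](x)-\gamma_i(e\cdot x)^+u^c_i+\ell_i$. Controlled diffusion $dX_t=b(X_t,U_t)dt+\Sigma dW_t$ with $\Sigma=\operatorname{diag}(\sqrt{2\lambda_i})$; controlled generator $\mathcal L^u f(x)=\sum_i\lambda_i\partial_{ii}f(x)+b(x,u)\cdot\nabla f(x)$. A constant control $\bar u\in\mathbb U$ means $U_t\equiv\bar u$. *)

theory Defs
  imports "HOL-Analysis.Analysis"
begin

fun badj :: "('i \<Rightarrow> 'j \<Rightarrow> bool) \<Rightarrow> 'i + 'j \<Rightarrow> 'i + 'j \<Rightarrow> bool" where
  "badj E (Inl i) (Inr j) = E i j"
| "badj E (Inr j) (Inl i) = E i j"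
| "badj E _ _ = False"

definition is_walk :: "('i \<Rightarrow> 'j \<Rightarrow> bool) \<Rightarrow> ('i + 'j) list \<Rightarrow> bool" where
  "is_walk E vs \<longleftrightarrow> (\<forall>k. Suc k < length vs \<longrightarrow> badj E (vs ! k) (vs ! Suc k))"

definition bconnected :: "('i \<Rightarrow> 'j \<Rightarrow> bool) \<Rightarrow> bool" where
  "bconnected E \<longleftrightarrow> (\<forall>v w. \<exists>vs. vs \<noteq> [] \<and> hd vs = v \<and> last vs = w \<and> is_walk E vs)"

definition has_cycle :: "('i \<Rightarrow> 'j \<Rightarrow> bool) \<Rightarrow> bool" where
  "has_cycle E \<longleftrightarrow> (\<exists>vs. 3 \<le> length vs \<and> distinct vs \<and> is_walk E vs \<and> badj E (last vs) (hd vs))"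

definition bip_tree :: "('i \<Rightarrow> 'j \<Rightarrow> bool) \<Rightarrow> bool" where
  "bip_tree E \<longleftrightarrow> bconnected E \<and> \<not> has_cycle E"

definition ppart :: "real \<Rightarrow> real" where "ppart a = max a 0"
definition npart :: "real \<Rightarrow> real" where "npart a = max (- a) 0"

definition esum :: "real^'i \<Rightarrow> real" where "esum x = (\<Sum>i\<in>UNIV. x $ i)"

definition Gmat :: "('i::finite \<Rightarrow> 'j::finite \<Rightarrow> bool) \<Rightarrow> ('i \<Rightarrow> real) \<Rightarrow> ('j \<Rightarrow> real)
    \<Rightarrow> ('i \<Rightarrow> 'j \<Rightarrow> real)" where
  "Gmat E \<alpha> \<beta> = (THE \<psi>. (\<forall>i. (\<Sum>j\<in>UNIV. \<psi> i j) = \<alpha> i) \<and> (\<forall>j. (\<Sum>i\<in>UNIV. \<psi> i j) = \<beta> j)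
                        \<and> (\<forall>i j. \<not> E i j \<longrightarrow> \<psi> i j = 0))"

definition Uset :: "(('i::finite \<Rightarrow> real) \<times> ('j::finite \<Rightarrow> real)) set" where
  "Uset = {(uc, us). (\<forall>i. 0 \<le> uc i) \<and> (\<forall>j. 0 \<le> us j) \<and> sum uc UNIV = 1 \<and> sum us UNIV = 1}"

definition Ghat :: "('i::finite \<Rightarrow> 'j::finite \<Rightarrow> bool) \<Rightarrow> ('i \<Rightarrow> real) \<times> ('j \<Rightarrow> real)
    \<Rightarrow> real^'i \<Rightarrow> ('i \<Rightarrow> 'j \<Rightarrow> real)" where
  "Ghat E u x = Gmat E (\<lambda>i. x $ i - ppart (esum x) * fst u i) (\<lambda>j. - npart (esum x) * snd u j)"

definition drift :: "('i::finite \<Rightarrow> 'j::finite \<Rightarrow> bool) \<Rightarrow> ('i \<Rightarrow> 'j \<Rightarrow> real) \<Rightarrow> ('i \<Rightarrow> real)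
    \<Rightarrow> ('i \<Rightarrow> real) \<Rightarrow> real^'i \<Rightarrow> ('i \<Rightarrow> real) \<times> ('j \<Rightarrow> real) \<Rightarrow> real^'i" where
  "drift E \<mu> \<gamma> ell x u = (\<chi> i. - (\<Sum>j\<in>{j. E i j}. \<mu> i j * Ghat E u x i j)
                              - \<gamma> i * ppart (esum x) * fst u i + ell i)"

definition C2 :: "(real^'i::finite \<Rightarrow> real) \<Rightarrow> bool" where
  "C2 f \<longleftrightarrow> (\<exists>(f' :: real^'i \<Rightarrow> ((real^'i) \<Rightarrow>\<^sub>L real))
                 (f'' :: real^'i \<Rightarrow> ((real^'i) \<Rightarrow>\<^sub>L ((real^'i) \<Rightarrow>\<^sub>L real))).
        (\<forall>x. (f has_derivative blinfun_apply (f' x)) (at x)) \<and>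
        (\<forall>x. (f' has_derivative blinfun_apply (f'' x)) (at x)) \<and>
        continuous_on UNIV f'')"

definition partial :: "'i::finite \<Rightarrow> (real^'i \<Rightarrow> real) \<Rightarrow> real^'i \<Rightarrow> real" where
  "partial i f x = deriv (\<lambda>t. f (x + t *\<^sub>R axis i 1)) 0"

definition generator :: "('i::finite \<Rightarrow> 'j::finite \<Rightarrow> bool) \<Rightarrow> ('i \<Rightarrow> 'j \<Rightarrow> real) \<Rightarrow> ('i \<Rightarrow> real)
    \<Rightarrow> ('i \<Rightarrow> real) \<Rightarrow> ('i \<Rightarrow> real) \<Rightarrow> ('i \<Rightarrow> real) \<times> ('j \<Rightarrow> real)
    \<Rightarrow> (real^'i \<Rightarrow> real) \<Rightarrow> real^'i \<Rightarrow> real" where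
  "generator E \<mu> lam \<gamma> ell u f x =
     (\<Sum>i\<in>UNIV. lam i * partial i (partial i f) x)
     + (\<Sum>i\<in>UNIV. drift E \<mu> \<gamma> ell x u $ i * partial i f x)"

end

theory Submission
  imports Defs
begin

lemma badj_sym: "badj E v w = badj E w v"
  by (cases v; cases w) auto

lemma badj_cases:
  assumes "badj E v w"
  obtains i j where "v = Inl i" "w = Inr j" "E i j" | i j where "v = Inr j" "w = Inl i" "E i j"
  using assms by (cases v; cases w) auto

lemma is_walk_map_upt:
  "is_walk E (map f [0..<n]) \<longleftrightarrow> (\<forall>k. Suc k < n \<longrightarrow> badj E (f k) (f (Suc k)))"
  unfolding is_walk_def by auto

locale rtree =
  fixes E :: "'i::finite \<Rightarrow> 'j::finite \<Rightarrow> bool" and j0 :: 'j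
  assumes tree: "bip_tree E"
begin

fun reach :: "nat \<Rightarrow> 'i + 'j \<Rightarrow> bool" where
  "reach 0 v = (v = Inr j0)"
| "reach (Suc n) v = (\<exists>w. reach n w \<and> badj E w v)"

lemma reach_walk:
  assumes "is_walk E vs" "hd vs = Inr j0" "k < length vs"
  shows "reach k (vs ! k)"
  using assms(3)
proof (induction k)
  case 0
  then show ?case using assms(2) by (cases vs) auto
next
  case (Suc k)
  then have "badj E (vs ! k) (vs ! Suc k)" using assms(1) unfolding is_walk_def by auto
  then show ?case using Suc by auto
qed

lemma reach_ex: "\<exists>n. reach n v"
proof -
  obtain vs where vs: "vs \<noteq> []" "hd vs = Inr j0" "last vs = v" "is_walk E vs"
    using tree unfolding bip_tree_def bconnected_def by blast
  have "reach (length vs - 1) (vs ! (length vs - 1))"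
    using vs by (intro reach_walk) auto
  then show ?thesis using vs by (metis last_conv_nth)
qed

lemma reach_parity:
  "reach n v \<Longrightarrow> (case v of Inl i \<Rightarrow> odd n | Inr j \<Rightarrow> even n)"
proof (induction n arbitrary: v)
  case 0
  then show ?case by auto
next
  case (Suc n)
  then obtain w where "reach n w" "badj E w v" by auto
  then show ?case using Suc.IH[of w] by (elim badj_cases) auto
qed

definition dist :: "'i + 'j \<Rightarrow> nat" where "dist v = (LEAST n. reach n v)"

lemma reach_dist: "reach (dist v) v"
  unfolding dist_def using reach_ex by (metis LeastI_ex)

lemma dist_le: "reach n v \<Longrightarrow> dist v \<le> n"
  unfolding dist_def by (rule Least_le)

lemma dist_root[simp]: "dist (Inr j0) = 0"
  using dist_le[of 0 "Inr j0"] by simp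

lemma dist_0_iff: "dist v = 0 \<longleftrightarrow> v = Inr j0"
  using reach_dist[of v] by (metis dist_root reach.simps(1))

lemma adj_dist_le: "badj E w v \<Longrightarrow> dist v \<le> dist w + 1"
  using dist_le[of "Suc (dist w)" v] reach_dist[of w] by auto

lemma dist_parity: "case v of Inl i \<Rightarrow> odd (dist v) | Inr j \<Rightarrow> even (dist v)"
  using reach_parity[OF reach_dist] .

lemma adj_dist: "badj E w v \<Longrightarrow> dist v = dist w + 1 \<or> dist w = dist v + 1"
proof -
  assume a: "badj E w v"
  have "dist v \<le> dist w + 1" "dist w \<le> dist v + 1"
    using adj_dist_le a badj_sym by metis+
  moreover have "odd (dist v + dist w)"
    using a dist_parity[of v] dist_parity[of w] by (elim badj_cases) auto
  moreover have "dist v \<noteq> dist w" using calculation(3) by auto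
  ultimately show ?thesis by linarith
qed

lemma par_ex: "v \<noteq> Inr j0 \<Longrightarrow> \<exists>w. badj E w v \<and> dist w + 1 = dist v"
proof -
  assume v: "v \<noteq> Inr j0"
  then obtain n where n: "dist v = Suc n" using dist_0_iff by (cases "dist v") auto
  then obtain w where w: "reach n w" "badj E w v" using reach_dist[of v] by auto
  have "dist w \<le> n" using dist_le[OF w(1)] .
  moreover have "dist v \<le> dist w + 1" using adj_dist_le[OF w(2)] .
  ultimately show ?thesis using w n by (intro exI[of _ w]) auto
qed

definition par :: "'i + 'j \<Rightarrow> 'i + 'j" where
  "par v = (if v = Inr j0 then v else SOME w. badj E w v \<and> dist w + 1 = dist v)"

lemma par_root[simp]: "par (Inr j0) = Inr j0" unfolding par_def by simp

lemma par_props: "v \<noteq> Inr j0 \<Longrightarrow> badj E (par v) v \<and> dist (par v) + 1 = dist v"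
  unfolding par_def using someI_ex[OF par_ex[of v]] by simp

lemma dist_funpow: "k \<le> dist u \<Longrightarrow> dist ((par ^^ k) u) = dist u - k"
proof (induction k)
  case 0 then show ?case by simp
next
  case (Suc k)
  then have "dist ((par ^^ k) u) > 0" by simp
  then have "(par ^^ k) u \<noteq> Inr j0" by auto
  then have "Suc (dist (par ((par ^^ k) u))) = dist u - k" using par_props[of "(par ^^ k) u"] Suc by simp
  then show ?case by simp
qed


lemma par_unique:
  assumes v: "v \<noteq> Inr j0" and w1: "badj E w1 v" and d1: "dist w1 + 1 = dist v"
  shows "w1 = par v"
proof (rule ccontr)
  assume ne: "w1 \<noteq> par v"
  define w2 where "w2 = par v"
  have w2: "badj E w2 v" "dist w2 + 1 = dist v" using par_props[OF v] w2_def by auto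
  define e where "e = dist w1"
  have e2: "dist w2 = e" using w2 d1 e_def by simp
  define a where "a k = (par ^^ k) w1" for k
  define b where "b k = (par ^^ k) w2" for k
  have da: "k \<le> e \<Longrightarrow> dist (a k) = e - k" for k using dist_funpow[of k w1] a_def e_def by simp
  have db: "k \<le> e \<Longrightarrow> dist (b k) = e - k" for k using dist_funpow[of k w2] b_def e2 by simp
  have ae: "a e = Inr j0" using da[of e] dist_0_iff by simp
  have be: "b e = Inr j0" using db[of e] dist_0_iff by simp
  define K where "K = (LEAST k. a k = b k)"
  have aK: "a K = b K" unfolding K_def by (rule LeastI[of _ e]) (simp add: ae be)
  have Ke: "K \<le> e" unfolding K_def by (rule Least_le) (simp add: ae be)
  have Kmin: "k < K \<Longrightarrow> a k \<noteq> b k" for k unfolding K_def by (rule not_less_Least)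
  have K1: "K \<ge> 1"
  proof (rule ccontr)
    assume "\<not> K \<ge> 1"
    then have "K = 0" by simp
    with aK have "a 0 = b 0" by simp
    then show False using ne unfolding a_def b_def w2_def by simp
  qed
  have apar: "k < e \<Longrightarrow> a (Suc k) = par (a k) \<and> badj E (par (a k)) (a k)" for k
  proof -
    assume "k < e"
    then have "dist (a k) \<noteq> 0" using da[of k] by simp
    then have "a k \<noteq> Inr j0" by auto
    then show ?thesis using par_props[of "a k"] unfolding a_def by simp
  qed
  have bpar: "k < e \<Longrightarrow> b (Suc k) = par (b k) \<and> badj E (par (b k)) (b k)" for k
  proof -
    assume "k < e"
    then have "dist (b k) \<noteq> 0" using db[of k] by simp
    then have "b k \<noteq> Inr j0" by auto
    then show ?thesis using par_props[of "b k"] unfolding b_def by simp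
  qed
  define f where "f n = (if n = 0 then v else if n \<le> K + 1 then a (n - 1) else b (2 * K + 1 - n))" for n
  define N where "N = 2 * K + 2"
  have walk: "is_walk E (map f [0..<N])"
    unfolding is_walk_map_upt
  proof (intro allI impI)
    fix k assume k: "Suc k < N"
    show "badj E (f k) (f (Suc k))"
    proof (cases "k = 0")
      case True
      then show ?thesis using w1 badj_sym[of E v w1] by (simp add: f_def a_def)
    next
      case False
      show ?thesis
      proof (cases "k \<le> K")
        case True
        then have "f k = a (k - 1)" "f (Suc k) = a k" using False f_def by auto
        moreover have "a k = par (a (k - 1))" "badj E (par (a (k - 1))) (a (k - 1))"
          using apar[of "k - 1"] True False Ke by auto
        ultimately show ?thesis using badj_sym by metis
      next
        case False2: False
        show ?thesis
        proof (cases "k = K + 1")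
          case True
          then have "f k = a K" "f (Suc k) = b (K - 1)" using f_def by (auto simp: numeral_2_eq_2)
          moreover have "b K = par (b (K - 1))" "badj E (par (b (K - 1))) (b (K - 1))"
            using bpar[of "K - 1"] K1 Ke by auto
          ultimately show ?thesis using aK by metis
        next
          case False3: False
          then have "f k = b (2 * K + 1 - k)" "f (Suc k) = b (2 * K - k)" using False2 f_def by auto
          moreover have "2 * K + 1 - k = Suc (2 * K - k)" using k N_def False2 False3 by auto
          moreover have "2 * K - k < e" using False2 Ke K1 by auto
          ultimately show ?thesis using bpar[of "2 * K - k"] badj_sym by metis
        qed
      qed
    qed
  qed
  have dv: "dist v = e + 1" using d1 e_def by simp
  have fdist: "n < N \<Longrightarrow> n \<noteq> 0 \<Longrightarrow> dist (f n) \<le> e" for n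
    unfolding f_def using da[of "n - 1"] db[of "2 * K + 1 - n"] Ke N_def by auto
  have inj: "inj_on f {0..<N}"
  proof (rule inj_onI)
    fix n1 n2 assume n1: "n1 \<in> {0..<N}" and n2: "n2 \<in> {0..<N}" and eq: "f n1 = f n2"
    show "n1 = n2"
    proof (cases "n1 = 0 \<or> n2 = 0")
      case True
      have f0: "f 0 = v" by (simp add: f_def)
      show ?thesis
      proof (rule ccontr)
        assume "n1 \<noteq> n2"
        then obtain n where "n \<noteq> 0" "n < N" "f n = v" using True n1 n2 eq f0 by auto
        then show False using fdist[of n] dv by simp
      qed
    next
      case False
      then have "dist (f n1) = dist (f n2)" using eq by simp
      have side: "n \<noteq> 0 \<Longrightarrow> n < N \<Longrightarrow> (n \<le> K + 1 \<and> f n = a (n - 1) \<and> dist (f n) = e - (n - 1))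
           \<or> (\<not> n \<le> K + 1 \<and> f n = b (2 * K + 1 - n) \<and> dist (f n) = e - (2 * K + 1 - n))" for n
        using da db Ke N_def unfolding f_def by auto
      note s1 = side[of n1] and s2 = side[of n2]
      have nn: "n1 \<noteq> 0" "n2 \<noteq> 0" "n1 < N" "n2 < N" using False n1 n2 by auto
      have ab: "a m \<noteq> b m'" if "m \<le> K" "m' < K" for m m'
      proof
        assume h: "a m = b m'"
        then have "e - m = e - m'" using da[of m] db[of m'] that Ke by (metis less_imp_le order_trans)
        then have "m = m'" using that Ke by auto
        then show False using h Kmin that by auto
      qed
      show ?thesis
      proof (cases "n1 \<le> K + 1"; cases "n2 \<le> K + 1")
        assume c: "n1 \<le> K + 1" "n2 \<le> K + 1"
        then have "e - (n1 - 1) = e - (n2 - 1)" using s1 s2 nn eq by auto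
        then show ?thesis using c nn Ke by auto
      next
        assume c: "n1 \<le> K + 1" "\<not> n2 \<le> K + 1"
        then have "a (n1 - 1) = b (2 * K + 1 - n2)" using s1 s2 nn eq by auto
        moreover have "2 * K + 1 - n2 < K" using c K1 by auto
        ultimately show ?thesis using ab c by auto
      next
        assume c: "\<not> n1 \<le> K + 1" "n2 \<le> K + 1"
        then have "a (n2 - 1) = b (2 * K + 1 - n1)" using s1 s2 nn eq by auto
        moreover have "2 * K + 1 - n1 < K" using c K1 by auto
        ultimately show ?thesis using ab c by auto
      next
        assume c: "\<not> n1 \<le> K + 1" "\<not> n2 \<le> K + 1"
        then have "e - (2 * K + 1 - n1) = e - (2 * K + 1 - n2)" using s1 s2 nn eq by auto
        then show ?thesis using c nn Ke N_def by auto
      qed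
    qed
  qed
  have "has_cycle E"
    unfolding has_cycle_def
  proof (intro exI[of _ "map f [0..<N]"] conjI)
    show "3 \<le> length (map f [0..<N])" using K1 N_def by simp
    show "distinct (map f [0..<N])" using inj by (simp add: distinct_map)
    show "is_walk E (map f [0..<N])" by (rule walk)
    have "last (map f [0..<N]) = f (N - 1)" using N_def by (simp add: last_map)
    also have "\<dots> = w2" using N_def K1 f_def b_def by auto
    finally show "badj E (last (map f [0..<N])) (hd (map f [0..<N]))"
      using w2 N_def f_def by (simp add: hd_map)
  qed
  then show False using tree unfolding bip_tree_def by simp
qed

end


context rtree begin

lemma par_nonroot: "c \<noteq> Inr j0 \<Longrightarrow> dist (par c) + 1 = dist c"
  using par_props[of c] by (rule conjunct2)

lemma par_badj: "c \<noteq> Inr j0 \<Longrightarrow> badj E (par c) c"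
  using par_props[of c] by (rule conjunct1)

lemma not_root_iff: "v \<noteq> Inr j0 \<longleftrightarrow> dist v > 0"
  using dist_0_iff[of v] by linarith

lemma edge_orient:
  assumes "E i j"
  shows "par (Inl i) = Inr j \<or> (j \<noteq> j0 \<and> par (Inr j) = Inl i)"
proof -
  have b1: "badj E (Inr j) (Inl i)" and b2: "badj E (Inl i) (Inr j)" using assms by auto
  from adj_dist[OF b1] show ?thesis
  proof
    assume h: "dist (Inl i) = dist (Inr j) + 1"
    have "Inr j = par (Inl i)" by (rule par_unique[OF _ b1]) (use h in simp_all)
    then show ?thesis by simp
  next
    assume h: "dist (Inr j) = dist (Inl i) + 1"
    have r: "Inr j \<noteq> Inr j0"
    proof
      assume "Inr j = Inr j0"
      then have "dist (Inr j) = 0" by simp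
      with h show False by simp
    qed
    have "Inl i = par (Inr j)" by (rule par_unique[OF r b2]) (use h in simp)
    then show ?thesis using r by simp
  qed
qed

lemma par_Inl: obtains jp where "par (Inl i) = Inr jp" "E i jp"
proof -
  have "badj E (par (Inl i)) (Inl i)" using par_badj[of "Inl i"] by simp
  then show ?thesis using that by (elim badj_cases) auto
qed

lemma par_Inr: assumes "j \<noteq> j0" obtains ip where "par (Inr j) = Inl ip" "E ip j"
proof -
  have "badj E (par (Inr j)) (Inr j)" using par_badj[of "Inr j"] assms by simp
  then show ?thesis using that by (elim badj_cases) auto
qed

lemma par_excl: "par (Inl i) = Inr j \<Longrightarrow> j \<noteq> j0 \<Longrightarrow> par (Inr j) = Inl i \<Longrightarrow> False"
  using par_nonroot[of "Inl i"] par_nonroot[of "Inr j"] by auto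

definition sub :: "'i + 'j \<Rightarrow> ('i + 'j) set" where
  "sub v = {u. dist v \<le> dist u \<and> (par ^^ (dist u - dist v)) u = v}"

definition ch :: "'i + 'j \<Rightarrow> ('i + 'j) set" where
  "ch v = {c. c \<noteq> Inr j0 \<and> par c = v}"

lemma sub_self: "v \<in> sub v" unfolding sub_def by simp

lemma sub_dist: "u \<in> sub v \<Longrightarrow> dist v \<le> dist u" unfolding sub_def by simp

lemma sub_eq: "u \<in> sub v \<Longrightarrow> dist u = dist v \<Longrightarrow> u = v" unfolding sub_def by simp

lemma sub_root: "sub (Inr j0) = UNIV"
proof -
  have "(par ^^ dist u) u = Inr j0" for u
    using dist_funpow[of "dist u" u] dist_0_iff[of "(par ^^ dist u) u"] by simp
  then show ?thesis unfolding sub_def by auto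
qed

lemma root_in_sub: "Inr j0 \<in> sub v \<Longrightarrow> v = Inr j0"
  using sub_dist[of "Inr j0" v] dist_0_iff[of v] by simp

lemma ch_dist: "c \<in> ch v \<Longrightarrow> dist c = dist v + 1"
  unfolding ch_def using par_nonroot by auto

lemma sub_decomp: "sub v = insert v (\<Union>c\<in>ch v. sub c)"
proof
  show "sub v \<subseteq> insert v (\<Union>c\<in>ch v. sub c)"
  proof
    fix u assume u: "u \<in> sub v"
    show "u \<in> insert v (\<Union>c\<in>ch v. sub c)"
    proof (cases "u = v")
      case True then show ?thesis by simp
    next
      case False
      define n where "n = dist u - dist v"
      have n0: "n > 0" using u False sub_eq sub_dist n_def by fastforce
      define c where "c = (par ^^ (n - 1)) u"
      have dc: "dist c = dist v + 1" using dist_funpow[of "n - 1" u] n0 n_def c_def by simp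
      then have cr: "c \<noteq> Inr j0" using dist_root by (metis add_is_0 one_neq_zero)
      have "par c = (par ^^ n) u" unfolding c_def using n0
        by (metis Suc_diff_1 comp_apply funpow.simps(2))
      also have "\<dots> = v" using u n_def unfolding sub_def by simp
      finally have "c \<in> ch v" using cr unfolding ch_def by simp
      moreover have "u \<in> sub c" unfolding sub_def using dc n_def c_def n0 sub_dist[OF u]
        by (simp add: Suc_diff_Suc)
      ultimately show ?thesis by blast
    qed
  qed
next
  show "insert v (\<Union>c\<in>ch v. sub c) \<subseteq> sub v"
  proof
    fix u assume "u \<in> insert v (\<Union>c\<in>ch v. sub c)"
    then consider "u = v" | c where "c \<in> ch v" "u \<in> sub c" by blast
    then show "u \<in> sub v"
    proof cases
      case 1 then show ?thesis using sub_self by simp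
    next
      case 2
      have dc: "dist c = dist v + 1" using ch_dist[OF 2(1)] .
      have du: "dist c \<le> dist u" using sub_dist[OF 2(2)] .
      have eq: "dist u - dist v = Suc (dist u - dist c)" using dc du by simp
      have "(par ^^ (dist u - dist v)) u = par ((par ^^ (dist u - dist c)) u)"
        unfolding eq by simp
      also have "\<dots> = par c" using 2(2) unfolding sub_def by simp
      also have "\<dots> = v" using 2(1) unfolding ch_def by simp
      finally show ?thesis unfolding sub_def using dc du by simp
    qed
  qed
qed

lemma v_notin_ch_sub: "c \<in> ch v \<Longrightarrow> v \<notin> sub c"
  using ch_dist sub_dist by fastforce

lemma ch_sub_disj: "c1 \<in> ch v \<Longrightarrow> c2 \<in> ch v \<Longrightarrow> c1 \<noteq> c2 \<Longrightarrow> sub c1 \<inter> sub c2 = {}"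
proof -
  assume c: "c1 \<in> ch v" "c2 \<in> ch v" "c1 \<noteq> c2"
  have "dist c1 = dist c2" using ch_dist c by simp
  then show ?thesis using c(3) unfolding sub_def by auto
qed

definition S :: "('i + 'j \<Rightarrow> real) \<Rightarrow> 'i + 'j \<Rightarrow> real" where
  "S w v = (\<Sum>u\<in>sub v. w u)"

lemma S_decomp: "S w v = w v + (\<Sum>c\<in>ch v. S w c)"
proof -
  have "S w v = (\<Sum>u\<in>insert v (\<Union>c\<in>ch v. sub c). w u)" unfolding S_def using sub_decomp by metis
  also have "\<dots> = w v + (\<Sum>u\<in>(\<Union>c\<in>ch v. sub c). w u)"
    using v_notin_ch_sub by (subst sum.insert) auto
  also have "(\<Sum>u\<in>(\<Union>c\<in>ch v. sub c). w u) = (\<Sum>c\<in>ch v. S w c)"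
    unfolding S_def using ch_sub_disj by (subst sum.UNION_disjoint) auto
  finally show ?thesis .
qed

lemma ch_Inl: "ch (Inl i) = Inr ` {j. j \<noteq> j0 \<and> par (Inr j) = Inl i}"
proof
  show "ch (Inl i) \<subseteq> Inr ` {j. j \<noteq> j0 \<and> par (Inr j) = Inl i}"
  proof
    fix c assume c: "c \<in> ch (Inl i)"
    then have "badj E (par c) c" "par c = Inl i" "c \<noteq> Inr j0" using par_badj[of c] unfolding ch_def by auto
    then show "c \<in> Inr ` {j. j \<noteq> j0 \<and> par (Inr j) = Inl i}" by (elim badj_cases) auto
  qed
qed (auto simp: ch_def)

lemma ch_Inr: "ch (Inr j) = Inl ` {i. par (Inl i) = Inr j}"
proof
  show "ch (Inr j) \<subseteq> Inl ` {i. par (Inl i) = Inr j}"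
  proof
    fix c assume c: "c \<in> ch (Inr j)"
    then have "badj E (par c) c" "par c = Inr j" "c \<noteq> Inr j0" using par_badj[of c] unfolding ch_def by auto
    then show "c \<in> Inl ` {i. par (Inl i) = Inr j}" by (elim badj_cases) auto
  qed
qed (auto simp: ch_def)

definition wt :: "('i \<Rightarrow> real) \<Rightarrow> ('j \<Rightarrow> real) \<Rightarrow> 'i + 'j \<Rightarrow> real" where
  "wt \<alpha> \<beta> u = (case u of Inl i \<Rightarrow> \<alpha> i | Inr j \<Rightarrow> - \<beta> j)"

definition psi :: "('i \<Rightarrow> real) \<Rightarrow> ('j \<Rightarrow> real) \<Rightarrow> 'i \<Rightarrow> 'j \<Rightarrow> real" where
  "psi \<alpha> \<beta> i j = (if par (Inl i) = Inr j then S (wt \<alpha> \<beta>) (Inl i)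
      else if j \<noteq> j0 \<and> par (Inr j) = Inl i then - S (wt \<alpha> \<beta>) (Inr j) else 0)"

lemma psi_supp: "\<not> E i j \<Longrightarrow> psi \<alpha> \<beta> i j = 0"
proof -
  assume ne: "\<not> E i j"
  have a: "par (Inl i) \<noteq> Inr j"
  proof
    assume h: "par (Inl i) = Inr j"
    obtain jp where "par (Inl i) = Inr jp" "E i jp" by (rule par_Inl)
    with h ne show False by simp
  qed
  have b: "par (Inr j) \<noteq> Inl i" if j: "j \<noteq> j0"
  proof
    assume h: "par (Inr j) = Inl i"
    obtain ip where "par (Inr j) = Inl ip" "E ip j" by (rule par_Inr[OF j])
    with h ne show False by simp
  qed
  show ?thesis unfolding psi_def using a b by auto
qed

lemma psi_row: "(\<Sum>j\<in>UNIV. psi \<alpha> \<beta> i j) = \<alpha> i"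
proof -
  obtain jp where jp: "par (Inl i) = Inr jp" using par_Inl by blast
  define CJ where "CJ = {j. j \<noteq> j0 \<and> par (Inr j) = Inl i}"
  have pt: "psi \<alpha> \<beta> i j = (if j = jp then S (wt \<alpha> \<beta>) (Inl i) else 0)
      + (if j \<in> CJ then - S (wt \<alpha> \<beta>) (Inr j) else 0)" for j
    unfolding psi_def CJ_def using jp par_excl[of i j] by auto
  have "(\<Sum>j\<in>UNIV. psi \<alpha> \<beta> i j) = S (wt \<alpha> \<beta>) (Inl i) - (\<Sum>j\<in>CJ. S (wt \<alpha> \<beta>) (Inr j))"
    unfolding pt sum.distrib by (simp add: sum.If_cases sum_negf)
  also have "(\<Sum>j\<in>CJ. S (wt \<alpha> \<beta>) (Inr j)) = (\<Sum>c\<in>ch (Inl i). S (wt \<alpha> \<beta>) c)"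
    unfolding ch_Inl CJ_def by (subst sum.reindex) auto
  moreover have "wt \<alpha> \<beta> (Inl i) = \<alpha> i" by (simp add: wt_def)
  ultimately show ?thesis using S_decomp[of "wt \<alpha> \<beta>" "Inl i"] by linarith
qed

lemma sum_UNIV_plus: "(\<Sum>u\<in>UNIV. f u) = (\<Sum>i\<in>UNIV. f (Inl i)) + (\<Sum>j\<in>UNIV. f (Inr j))"
  for f :: "'i + 'j \<Rightarrow> real"
proof -
  have "(\<Sum>u\<in>UNIV. f u) = (\<Sum>u\<in>UNIV <+> UNIV. f u)" by (simp only: UNIV_Plus_UNIV)
  also have "\<dots> = (\<Sum>i\<in>UNIV. f (Inl i)) + (\<Sum>j\<in>UNIV. f (Inr j))"
    by (subst sum.Plus) (simp_all add: comp_def)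
  finally show ?thesis .
qed

lemma psi_col:
  assumes bal: "sum \<alpha> UNIV = sum \<beta> UNIV"
  shows "(\<Sum>i\<in>UNIV. psi \<alpha> \<beta> i j) = \<beta> j"
proof -
  define CI where "CI = {i. par (Inl i) = Inr j}"
  have pt: "psi \<alpha> \<beta> i j = (if i \<in> CI then S (wt \<alpha> \<beta>) (Inl i) else 0)
      + (if j \<noteq> j0 \<and> par (Inr j) = Inl i then - S (wt \<alpha> \<beta>) (Inr j) else 0)" for i
    unfolding psi_def CI_def using par_excl[of i j] by auto
  have s1: "(\<Sum>i\<in>UNIV. (if i \<in> CI then S (wt \<alpha> \<beta>) (Inl i) else 0)) = S (wt \<alpha> \<beta>) (Inr j) + \<beta> j"
  proof -
    have "(\<Sum>i\<in>UNIV. (if i \<in> CI then S (wt \<alpha> \<beta>) (Inl i) else 0)) = (\<Sum>i\<in>CI. S (wt \<alpha> \<beta>) (Inl i))"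
      by (simp add: sum.If_cases)
    also have "\<dots> = (\<Sum>c\<in>ch (Inr j). S (wt \<alpha> \<beta>) c)"
      unfolding ch_Inr CI_def by (subst sum.reindex) auto
    moreover have "wt \<alpha> \<beta> (Inr j) = - \<beta> j" by (simp add: wt_def)
    ultimately show ?thesis using S_decomp[of "wt \<alpha> \<beta>" "Inr j"] by linarith
  qed
  show ?thesis
  proof (cases "j = j0")
    case True
    have "S (wt \<alpha> \<beta>) (Inr j) = (\<Sum>u\<in>UNIV. wt \<alpha> \<beta> u)"
      unfolding S_def True sub_root by simp
    also have "\<dots> = (\<Sum>i\<in>UNIV. wt \<alpha> \<beta> (Inl i)) + (\<Sum>j\<in>UNIV. wt \<alpha> \<beta> (Inr j))"
      by (rule sum_UNIV_plus)
    also have "\<dots> = 0" using bal by (simp add: wt_def sum_negf)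
    finally have "S (wt \<alpha> \<beta>) (Inr j) = 0" .
    then show ?thesis unfolding pt sum.distrib s1 using True by simp
  next
    case False
    obtain ip where ip: "par (Inr j) = Inl ip" using par_Inr[OF False] by blast
    have "(\<Sum>i\<in>UNIV. (if j \<noteq> j0 \<and> par (Inr j) = Inl i then - S (wt \<alpha> \<beta>) (Inr j) else 0))
        = - S (wt \<alpha> \<beta>) (Inr j)"
      using False ip by simp
    then show ?thesis unfolding pt sum.distrib s1 by simp
  qed
qed

lemma NC:
  assumes row: "\<forall>i. (\<Sum>j\<in>UNIV. \<phi> i j) = (0::real)"
    and col: "\<forall>j. (\<Sum>i\<in>UNIV. \<phi> i j) = 0"
    and supp: "\<forall>i j. \<not> E i j \<longrightarrow> \<phi> i j = 0"
  shows "\<phi> i j = 0"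
proof -
  define D where "D = Max (range dist)"
  have dD: "dist v \<le> D" for v unfolding D_def by simp
  define dep where "dep i j = max (dist (Inl i)) (dist (Inr j))" for i j
  have main: "\<forall>i j. D - dep i j = n \<longrightarrow> \<phi> i j = 0" for n
  proof (induction n rule: less_induct)
    case (less n)
    show ?case
    proof (intro allI impI)
      fix i j assume n: "D - dep i j = n"
      show "\<phi> i j = 0"
      proof (cases "E i j")
        case False then show ?thesis using supp by simp
      next
        case True
        from edge_orient[OF True] show ?thesis
        proof
          assume p: "par (Inl i) = Inr j"
          have di: "dist (Inr j) + 1 = dist (Inl i)" using par_nonroot[of "Inl i"] p by simp
          have oth: "\<phi> i j' = 0" if "j' \<noteq> j" for j'
          proof (cases "E i j'")
            case False then show ?thesis using supp by simp
          next
            case True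
            then have "j' \<noteq> j0" "par (Inr j') = Inl i" using edge_orient[OF True] p that by auto
            then have "dist (Inl i) + 1 = dist (Inr j')" using par_nonroot[of "Inr j'"] by simp
            then have "D - dep i j' < n" using n di dD[of "Inr j'"] unfolding dep_def by auto
            then show ?thesis using less by blast
          qed
          have "0 = (\<Sum>j'\<in>UNIV. \<phi> i j')" using row by simp
          also have "\<dots> = \<phi> i j + (\<Sum>j'\<in>UNIV - {j}. \<phi> i j')" by (subst sum.remove[of _ j]) auto
          also have "(\<Sum>j'\<in>UNIV - {j}. \<phi> i j') = 0" using oth by (intro sum.neutral) auto
          finally show ?thesis by simp
        next
          assume p: "j \<noteq> j0 \<and> par (Inr j) = Inl i"
          have di: "dist (Inl i) + 1 = dist (Inr j)" using par_nonroot[of "Inr j"] p by simp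
          have oth: "\<phi> i' j = 0" if "i' \<noteq> i" for i'
          proof (cases "E i' j")
            case False then show ?thesis using supp by simp
          next
            case True
            then have "par (Inl i') = Inr j" using edge_orient[OF True] p that by auto
            then have "dist (Inr j) + 1 = dist (Inl i')" using par_nonroot[of "Inl i'"] by simp
            then have "D - dep i' j < n" using n di dD[of "Inl i'"] unfolding dep_def by auto
            then show ?thesis using less by blast
          qed
          have "0 = (\<Sum>i'\<in>UNIV. \<phi> i' j)" using col by simp
          also have "\<dots> = \<phi> i j + (\<Sum>i'\<in>UNIV - {i}. \<phi> i' j)" by (subst sum.remove[of _ i]) auto
          also have "(\<Sum>i'\<in>UNIV - {i}. \<phi> i' j) = 0" using oth by (intro sum.neutral) auto
          finally show ?thesis by simp
        qed
      qed
    qed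
  qed
  then show ?thesis by blast
qed

lemma Gmat_eq:
  assumes bal: "sum \<alpha> UNIV = sum \<beta> UNIV"
  shows "Gmat E \<alpha> \<beta> = psi \<alpha> \<beta>"
  unfolding Gmat_def
proof (rule the_equality)
  show "(\<forall>i. (\<Sum>j\<in>UNIV. psi \<alpha> \<beta> i j) = \<alpha> i) \<and> (\<forall>j. (\<Sum>i\<in>UNIV. psi \<alpha> \<beta> i j) = \<beta> j)
        \<and> (\<forall>i j. \<not> E i j \<longrightarrow> psi \<alpha> \<beta> i j = 0)"
    using psi_row psi_col[OF bal] psi_supp by blast
next
  fix \<psi> assume h: "(\<forall>i. (\<Sum>j\<in>UNIV. \<psi> i j) = \<alpha> i) \<and> (\<forall>j. (\<Sum>i\<in>UNIV. \<psi> i j) = \<beta> j)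
        \<and> (\<forall>i j. \<not> E i j \<longrightarrow> \<psi> i j = 0)"
  have "(\<lambda>i j. \<psi> i j - psi \<alpha> \<beta> i j) i j = 0" for i j
    by (rule NC) (use h psi_row psi_col[OF bal] psi_supp in \<open>auto simp: sum_subtractf\<close>)
  then show "\<psi> = psi \<alpha> \<beta>" by (auto simp: fun_eq_iff)
qed

end


lemma amgm_ab: "a > 0 \<Longrightarrow> \<bar>u\<bar> * \<bar>v\<bar> \<le> a * u\<^sup>2 / 2 + v\<^sup>2 / (2 * a)" for a u v :: real
proof -
  assume a: "a > 0"
  have "0 \<le> (a * \<bar>u\<bar> - \<bar>v\<bar>)\<^sup>2" by simp
  then have "2 * a * (\<bar>u\<bar> * \<bar>v\<bar>) \<le> a\<^sup>2 * u\<^sup>2 + v\<^sup>2"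
    by (simp add: power2_eq_square algebra_simps)
  then have "\<bar>u\<bar> * \<bar>v\<bar> \<le> (a\<^sup>2 * u\<^sup>2 + v\<^sup>2) / (2 * a)" using a by (simp add: field_simps)
  also have "\<dots> = a * u\<^sup>2 / 2 + v\<^sup>2 / (2 * a)" using a by (simp add: field_simps power2_eq_square)
  finally show ?thesis .
qed

lemma lyap_tri:
  fixes rank :: "'i::finite \<Rightarrow> nat" and K :: "'i \<Rightarrow> real" and d :: real
  assumes d: "d > 0" and K: "\<forall>i. K i \<ge> 0"
  shows "\<exists>q. (\<forall>i. q i \<ge> 1) \<and> (\<forall>y m :: 'i \<Rightarrow> real.
     (\<forall>i. y i * m i \<ge> d * (y i)\<^sup>2 - K i * \<bar>y i\<bar> * (\<Sum>i'\<in>UNIV. if rank i < rank i' then \<bar>y i'\<bar> else 0))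
     \<longrightarrow> (\<Sum>i\<in>UNIV. q i * (y i * m i)) \<ge> d / 4 * (\<Sum>i\<in>UNIV. (y i)\<^sup>2))"
proof -
  define Kt where "Kt = (\<Sum>i\<in>UNIV. K i)"
  define n where "n = real (card (UNIV :: 'i set))"
  have Kt0: "Kt \<ge> 0" unfolding Kt_def using K by (simp add: sum_nonneg)
  have KKt: "K i \<le> Kt" for i unfolding Kt_def using K
    by (intro member_le_sum) auto
  have n1: "n \<ge> 1" unfolding n_def by (simp add: Suc_leI card_gt_0_iff)
  define a where "a = d / (n * Kt + 1)"
  have a0: "a > 0" unfolding a_def using d n1 Kt0 by (simp add: add_nonneg_pos)
  have naK: "n * K i * a \<le> d" for i
  proof -
    have "n * K i \<le> n * Kt + 1" using KKt[of i] n1 by (simp add: mult_left_mono add_increasing2)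
    then have "n * K i * a \<le> (n * Kt + 1) * a" using a0 by (simp add: mult_right_mono)
    also have "\<dots> = d"
    proof -
      have "n * Kt + 1 > 0" using n1 Kt0 by (simp add: add_nonneg_pos)
      then show ?thesis unfolding a_def by simp
    qed
    finally show ?thesis .
  qed
  define \<rho> where "\<rho> = 1 + 2 * Kt / (a * d)"
  have \<rho>1: "\<rho> \<ge> 1" unfolding \<rho>_def using Kt0 a0 d by simp
  have \<rho>K: "Kt / (2 * a) \<le> d / 4 * \<rho>"
  proof -
    have "Kt / (2 * a) = d / 4 * (2 * Kt / (a * d))" using a0 d by (simp add: field_simps)
    also have "\<dots> \<le> d / 4 * \<rho>" unfolding \<rho>_def using d by (simp add: field_simps)
    finally show ?thesis .
  qed
  define q where "q i = \<rho> ^ rank i" for i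
  have q1: "q i \<ge> 1" for i unfolding q_def using \<rho>1 by simp
  show ?thesis
  proof (intro exI[of _ q] conjI allI impI)
    fix i show "1 \<le> q i" by (rule q1)
  next
    fix y m :: "'i \<Rightarrow> real"
    assume h: "\<forall>i. y i * m i \<ge> d * (y i)\<^sup>2 - K i * \<bar>y i\<bar> * (\<Sum>i'\<in>UNIV. if rank i < rank i' then \<bar>y i'\<bar> else 0)"
    define T2 where "T2 i = (\<Sum>k\<in>UNIV. if rank i < rank k then (y k)\<^sup>2 else 0)" for i
    have step1: "K i * \<bar>y i\<bar> * (\<Sum>k\<in>UNIV. if rank i < rank k then \<bar>y k\<bar> else 0)
        \<le> d / 2 * (y i)\<^sup>2 + K i / (2 * a) * T2 i" for i
    proof -
      have "K i * \<bar>y i\<bar> * (\<Sum>k\<in>UNIV. if rank i < rank k then \<bar>y k\<bar> else 0)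
          = (\<Sum>k\<in>UNIV. if rank i < rank k then K i * (\<bar>y i\<bar> * \<bar>y k\<bar>) else 0)"
        by (simp add: sum_distrib_left if_distrib mult.assoc cong: if_cong)
      also have "\<dots> \<le> (\<Sum>k\<in>UNIV. K i * (a * (y i)\<^sup>2 / 2) + (if rank i < rank k then K i / (2 * a) * (y k)\<^sup>2 else 0))"
      proof (rule sum_mono)
        fix k
        have "K i * (\<bar>y i\<bar> * \<bar>y k\<bar>) \<le> K i * (a * (y i)\<^sup>2 / 2 + (y k)\<^sup>2 / (2 * a))"
          using amgm_ab[OF a0, of "y i" "y k"] K by (simp add: mult_left_mono)
        moreover have "K i * (a * (y i)\<^sup>2 / 2) \<ge> 0" using K a0 by simp
        ultimately show "(if rank i < rank k then K i * (\<bar>y i\<bar> * \<bar>y k\<bar>) else 0)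
            \<le> K i * (a * (y i)\<^sup>2 / 2) + (if rank i < rank k then K i / (2 * a) * (y k)\<^sup>2 else 0)"
          by (simp add: algebra_simps)
      qed
      also have "\<dots> = n * K i * a * (y i)\<^sup>2 / 2 + K i / (2 * a) * T2 i"
        unfolding sum.distrib T2_def n_def by (simp add: sum_distrib_left if_distrib cong: if_cong)
      also have "\<dots> \<le> d / 2 * (y i)\<^sup>2 + K i / (2 * a) * T2 i"
        using naK[of i] by (simp add: mult_right_mono)
      finally show ?thesis .
    qed
    have step3: "(\<Sum>i\<in>UNIV. q i * (y i * m i)) \<ge>
        (\<Sum>i\<in>UNIV. q i * (d / 2 * (y i)\<^sup>2)) - (\<Sum>i\<in>UNIV. q i * (K i / (2 * a) * T2 i))"
    proof -
      have "(\<Sum>i\<in>UNIV. q i * (d / 2 * (y i)\<^sup>2 - K i / (2 * a) * T2 i)) \<le> (\<Sum>i\<in>UNIV. q i * (y i * m i))"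
      proof (rule sum_mono)
        fix i
        have "d / 2 * (y i)\<^sup>2 - K i / (2 * a) * T2 i \<le> y i * m i"
          using spec[OF h, of i] step1[of i] by linarith
        then show "q i * (d / 2 * (y i)\<^sup>2 - K i / (2 * a) * T2 i) \<le> q i * (y i * m i)"
          using q1[of i] by (simp add: mult_left_mono)
      qed
      then show ?thesis by (simp add: right_diff_distrib sum_subtractf)
    qed
    have step4: "(\<Sum>i\<in>UNIV. q i * (K i / (2 * a) * T2 i)) \<le> (\<Sum>k\<in>UNIV. (y k)\<^sup>2 * (d / 4 * q k))"
    proof -
      have "(\<Sum>i\<in>UNIV. q i * (K i / (2 * a) * T2 i))
          = (\<Sum>i\<in>UNIV. \<Sum>k\<in>UNIV. if rank i < rank k then (y k)\<^sup>2 * (q i * K i / (2 * a)) else 0)"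
        unfolding T2_def by (simp add: sum_distrib_left if_distrib mult_ac cong: if_cong)
      also have "\<dots> = (\<Sum>k\<in>UNIV. \<Sum>i\<in>UNIV. if rank i < rank k then (y k)\<^sup>2 * (q i * K i / (2 * a)) else 0)"
        by (rule sum.swap)
      also have "\<dots> \<le> (\<Sum>k\<in>UNIV. (y k)\<^sup>2 * (d / 4 * q k))"
      proof (rule sum_mono)
        fix k
        have "(\<Sum>i\<in>UNIV. if rank i < rank k then (y k)\<^sup>2 * (q i * K i / (2 * a)) else 0)
            \<le> (\<Sum>i\<in>UNIV. (y k)\<^sup>2 * (q k / \<rho> * K i / (2 * a)))"
        proof (rule sum_mono)
          fix i
          have "rank i < rank k \<Longrightarrow> q i \<le> q k / \<rho>"
          proof -
            assume "rank i < rank k"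
            then have "\<rho> ^ (rank i + 1) \<le> \<rho> ^ rank k" using \<rho>1 by (intro power_increasing) auto
            then show "q i \<le> q k / \<rho>" unfolding q_def using \<rho>1 by (simp add: field_simps)
          qed
          then show "(if rank i < rank k then (y k)\<^sup>2 * (q i * K i / (2 * a)) else 0)
              \<le> (y k)\<^sup>2 * (q k / \<rho> * K i / (2 * a))"
          proof (cases "rank i < rank k")
            case True
            have "q i * K i \<le> q k / \<rho> * K i" using \<open>rank i < rank k \<Longrightarrow> q i \<le> q k / \<rho>\<close>[OF True] K
              by (intro mult_right_mono) auto
            then have "q i * K i / (2 * a) \<le> q k / \<rho> * K i / (2 * a)" using a0 by (intro divide_right_mono) auto
            then have "(y k)\<^sup>2 * (q i * K i / (2 * a)) \<le> (y k)\<^sup>2 * (q k / \<rho> * K i / (2 * a))"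
              by (intro mult_left_mono) auto
            then show ?thesis using True by simp
          next
            case False
            have "0 \<le> q k / \<rho> * K i / (2 * a)" using K a0 q1[of k] \<rho>1 by simp
            then have "0 \<le> (y k)\<^sup>2 * (q k / \<rho> * K i / (2 * a))" by (intro mult_nonneg_nonneg) auto
            then show ?thesis using False by simp
          qed
        qed
        also have "\<dots> = (y k)\<^sup>2 * (q k / \<rho>) * (Kt / (2 * a))"
          unfolding Kt_def by (simp add: sum_distrib_left sum_divide_distrib mult_ac)
        also have "\<dots> \<le> (y k)\<^sup>2 * (q k / \<rho>) * (d / 4 * \<rho>)"
          using \<rho>K q1[of k] \<rho>1 by (intro mult_left_mono) auto
        also have "\<dots> = (y k)\<^sup>2 * (d / 4 * q k)" using \<rho>1 by (simp add: field_simps)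
        finally show "(\<Sum>i\<in>UNIV. if rank i < rank k then (y k)\<^sup>2 * (q i * K i / (2 * a)) else 0)
            \<le> (y k)\<^sup>2 * (d / 4 * q k)" .
      qed
      finally show ?thesis .
    qed
    have "d / 4 * (\<Sum>i\<in>UNIV. (y i)\<^sup>2) \<le> (\<Sum>i\<in>UNIV. q i * (d / 4 * (y i)\<^sup>2))"
      unfolding sum_distrib_left
    proof (intro sum_mono)
      fix i
      have "1 * (d / 4 * (y i)\<^sup>2) \<le> q i * (d / 4 * (y i)\<^sup>2)"
        using q1[of i] d by (intro mult_right_mono) auto
      then show "d / 4 * (y i)\<^sup>2 \<le> q i * (d / 4 * (y i)\<^sup>2)" by simp
    qed
    also have "\<dots> = (\<Sum>i\<in>UNIV. q i * (d / 2 * (y i)\<^sup>2)) - (\<Sum>k\<in>UNIV. (y k)\<^sup>2 * (d / 4 * q k))"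
      by (simp add: sum_subtractf[symmetric] algebra_simps)
    also have "\<dots> \<le> (\<Sum>i\<in>UNIV. q i * (y i * m i))" using step3 step4 by linarith
    finally show "d / 4 * (\<Sum>i\<in>UNIV. (y i)\<^sup>2) \<le> (\<Sum>i\<in>UNIV. q i * (y i * m i))" .
  qed
qed



context rtree begin

lemma S_Inl: "S w (Inl i) = w (Inl i) + (\<Sum>j\<in>{j. j \<noteq> j0 \<and> par (Inr j) = Inl i}. S w (Inr j))"
proof -
  have "(\<Sum>j\<in>{j. j \<noteq> j0 \<and> par (Inr j) = Inl i}. S w (Inr j)) = (\<Sum>c\<in>ch (Inl i). S w c)"
    unfolding ch_Inl by (subst sum.reindex) auto
  then show ?thesis using S_decomp[of w "Inl i"] by simp
qed

lemma psi_wsum: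
  assumes jp: "par (Inl i) = Inr jp"
  shows "(\<Sum>j\<in>UNIV. c j * psi \<alpha> \<beta> i j) = c jp * S (wt \<alpha> \<beta>) (Inl i)
     - (\<Sum>j\<in>{j. j \<noteq> j0 \<and> par (Inr j) = Inl i}. c j * S (wt \<alpha> \<beta>) (Inr j))"
proof -
  define CJ where "CJ = {j. j \<noteq> j0 \<and> par (Inr j) = Inl i}"
  have pt: "c j * psi \<alpha> \<beta> i j = (if j = jp then c jp * S (wt \<alpha> \<beta>) (Inl i) else 0)
      + (if j \<in> CJ then - (c j * S (wt \<alpha> \<beta>) (Inr j)) else 0)" for j
    unfolding psi_def CJ_def using jp par_excl[of i j] by auto
  show ?thesis unfolding pt sum.distrib CJ_def[symmetric] by (simp add: sum.If_cases sum_negf)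
qed

end

locale net = rtree E j0 for E :: "'i::finite \<Rightarrow> 'j::finite \<Rightarrow> bool" and j0 +
  fixes \<mu> :: "'i \<Rightarrow> 'j \<Rightarrow> real" and \<gamma> ell :: "'i \<Rightarrow> real" and k :: 'i
  assumes mu_pos: "\<forall>i j. E i j \<longrightarrow> 0 < \<mu> i j"
    and mu_zero: "\<forall>i j. \<not> E i j \<longrightarrow> \<mu> i j = 0"
    and gam_k: "\<gamma> k > 0"
    and Ekj0: "E k j0"
begin

definition uc :: "'i \<Rightarrow> real" where "uc i = (if i = k then 1 else 0)"
definition us :: "'j \<Rightarrow> real" where "us j = (if j = j0 then 1 else 0)"

lemma ubar_U: "(uc, us) \<in> Uset"
  unfolding Uset_def uc_def us_def by auto

definition pj :: "'i \<Rightarrow> 'j" where "pj i = projr (par (Inl i))"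

lemma pj: "par (Inl i) = Inr (pj i)" "E i (pj i)"
proof -
  obtain jp where "par (Inl i) = Inr jp" "E i jp" by (rule par_Inl)
  then show "par (Inl i) = Inr (pj i)" "E i (pj i)" unfolding pj_def by auto
qed

lemma dist_Inl_pos: "dist (Inl i) \<ge> 1"
proof -
  have "dist (Inl i) \<noteq> 0"
  proof
    assume "dist (Inl i) = 0"
    then have "reach 0 (Inl i)" using reach_dist[of "Inl i"] by simp
    then show False by simp
  qed
  then show ?thesis by simp
qed

lemma dist_k: "dist (Inl k) = 1"
proof -
  have "badj E (Inr j0) (Inl k)" using Ekj0 by simp
  then have "dist (Inl k) \<le> 1" using adj_dist_le by fastforce
  then show ?thesis using dist_Inl_pos[of k] by simp
qed

lemma pj_k: "pj k = j0"
proof -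
  have b: "badj E (Inr j0) (Inl k)" using Ekj0 by simp
  have "Inr j0 = par (Inl k)" by (rule par_unique[OF _ b]) (simp_all add: dist_k)
  then show ?thesis using pj(1)[of k] by simp
qed

definition rank :: "'i \<Rightarrow> nat" where "rank i = (if i = k then 0 else dist (Inl i))"

definition CJ :: "'i \<Rightarrow> 'j set" where "CJ i = {j. j \<noteq> j0 \<and> par (Inr j) = Inl i}"

lemma CJ_dist: "j \<in> CJ i \<Longrightarrow> dist (Inr j) = dist (Inl i) + 1"
  unfolding CJ_def using par_nonroot[of "Inr j"] by auto

definition sx :: "real^'i \<Rightarrow> real" where "sx x = esum x"
definition ax :: "real^'i \<Rightarrow> 'i \<Rightarrow> real" where "ax x i = x $ i - ppart (sx x) * uc i"
definition bx :: "real^'i \<Rightarrow> 'j \<Rightarrow> real" where "bx x j = - npart (sx x) * us j"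

lemma bal_x: "sum (ax x) UNIV = sum (bx x) UNIV"
proof -
  have "sum (ax x) UNIV = sx x - ppart (sx x)"
    unfolding ax_def uc_def sx_def esum_def by (simp add: sum_subtractf sum_distrib_left[symmetric])
  moreover have "sum (bx x) UNIV = - npart (sx x)" unfolding bx_def us_def by (simp add: sum_negf sum_distrib_left[symmetric])
  ultimately show ?thesis unfolding ppart_def npart_def by auto
qed

definition Mx :: "real^'i \<Rightarrow> 'i \<Rightarrow> real" where
  "Mx x i = (\<Sum>j\<in>UNIV. \<mu> i j * psi (ax x) (bx x) i j) + \<gamma> i * ppart (sx x) * uc i"

lemma drift_eq: "drift E \<mu> \<gamma> ell x (uc, us) $ i = ell i - Mx x i"
proof -
  have G: "Ghat E (uc, us) x = psi (ax x) (bx x)"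
    unfolding Ghat_def using Gmat_eq[OF bal_x[of x]] unfolding ax_def bx_def sx_def by simp
  have "(\<Sum>j\<in>{j. E i j}. \<mu> i j * psi (ax x) (bx x) i j) = (\<Sum>j\<in>UNIV. \<mu> i j * psi (ax x) (bx x) i j)"
    using mu_zero by (intro sum.mono_neutral_left) auto
  then show ?thesis unfolding drift_def Mx_def G sx_def by simp
qed

definition wx :: "real^'i \<Rightarrow> 'i + 'j \<Rightarrow> real" where
  "wx x u = (case u of Inl i \<Rightarrow> x $ i | Inr _ \<Rightarrow> 0)"

lemma wx_simps[simp]: "wx x (Inl i) = x $ i" "wx x (Inr j) = 0"
  unfolding wx_def by simp_all

definition SX :: "real^'i \<Rightarrow> 'j \<Rightarrow> real" where
  "SX x j = (\<Sum>u\<in>sub (Inr j). wx x u)"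

lemma S_wt_Inr: assumes "j \<in> CJ i" shows "S (wt (ax x) (bx x)) (Inr j) = SX x j"
  unfolding S_def SX_def
proof (rule sum.cong[OF refl])
  fix u assume u: "u \<in> sub (Inr j)"
  have dj: "dist (Inr j) \<ge> 2" using CJ_dist[OF assms] dist_Inl_pos[of i] by simp
  show "wt (ax x) (bx x) u = wx x u"
  proof (cases u)
    case (Inl i')
    have "i' \<noteq> k" using sub_dist[OF u] dj Inl dist_k by auto
    then show ?thesis using Inl by (simp add: wt_def ax_def uc_def)
  next
    case (Inr j')
    have "j' \<noteq> j0"
    proof
      assume "j' = j0"
      then have "Inr j0 \<in> sub (Inr j)" using u Inr by simp
      then have "(Inr j :: 'i + 'j) = Inr j0" by (rule root_in_sub)
      then show False using assms unfolding CJ_def by simp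
    qed
    then show ?thesis using Inr by (simp add: wt_def bx_def us_def)
  qed
qed

lemma Mx_eq: "Mx x i = \<mu> i (pj i) * ax x i + (\<Sum>j\<in>CJ i. (\<mu> i (pj i) - \<mu> i j) * SX x j)
   + \<gamma> i * ppart (sx x) * uc i"
proof -
  have "(\<Sum>j\<in>UNIV. \<mu> i j * psi (ax x) (bx x) i j) = \<mu> i (pj i) * S (wt (ax x) (bx x)) (Inl i)
     - (\<Sum>j\<in>CJ i. \<mu> i j * S (wt (ax x) (bx x)) (Inr j))"
    using psi_wsum[OF pj(1)] unfolding CJ_def .
  also have "S (wt (ax x) (bx x)) (Inl i) = ax x i + (\<Sum>j\<in>CJ i. SX x j)"
    using S_Inl[of "wt (ax x) (bx x)" i] S_wt_Inr unfolding CJ_def[symmetric]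
    by (simp add: wt_def)
  also have "(\<Sum>j\<in>CJ i. \<mu> i j * S (wt (ax x) (bx x)) (Inr j)) = (\<Sum>j\<in>CJ i. \<mu> i j * SX x j)"
    using S_wt_Inr by simp
  finally show ?thesis unfolding Mx_def
    by (simp add: algebra_simps sum_distrib_left sum_subtractf)
qed

definition H :: "real^'i \<Rightarrow> 'i \<Rightarrow> real" where
  "H x i = (\<Sum>i'\<in>UNIV. if rank i < rank i' then \<bar>x $ i'\<bar> else 0)"

lemma sum_sub_Inl:
  "(\<Sum>u\<in>A. wx x u) = (\<Sum>i\<in>UNIV. if Inl i \<in> A then x $ i else 0)"
proof -
  have "(\<Sum>u\<in>A. wx x u) = (\<Sum>u\<in>UNIV. if u \<in> A then wx x u else 0)"
    by (simp add: sum.If_cases)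
  also have "\<dots> = (\<Sum>i\<in>UNIV. if Inl i \<in> A then x $ i else 0)"
    by (subst sum_UNIV_plus) (simp cong: if_cong)
  finally show ?thesis .
qed

lemma SX_bound: assumes "j \<in> CJ i" shows "\<bar>SX x j\<bar> \<le> H x i"
proof -
  have "\<bar>SX x j\<bar> = \<bar>\<Sum>i'\<in>UNIV. if Inl i' \<in> sub (Inr j) then x $ i' else 0\<bar>"
    unfolding SX_def sum_sub_Inl ..
  also have "\<dots> \<le> (\<Sum>i'\<in>UNIV. \<bar>if Inl i' \<in> sub (Inr j) then x $ i' else 0\<bar>)" by (rule sum_abs)
  also have "\<dots> \<le> H x i" unfolding H_def
  proof (rule sum_mono)
    fix i'
    show "\<bar>if Inl i' \<in> sub (Inr j) then x $ i' else 0\<bar> \<le> (if rank i < rank i' then \<bar>x $ i'\<bar> else 0)"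
    proof (cases "Inl i' \<in> sub (Inr j)")
      case True
      have d: "dist (Inl i') \<ge> dist (Inl i) + 1" using sub_dist[OF True] CJ_dist[OF assms] by simp
      then have "i' \<noteq> k" using dist_k dist_Inl_pos[of i] by auto
      then have "rank i < rank i'" using d unfolding rank_def by auto
      then show ?thesis using True by simp
    qed simp
  qed
  finally show ?thesis .
qed

definition Kc :: "'i \<Rightarrow> real" where
  "Kc i = (\<Sum>j\<in>CJ i. \<bar>\<mu> i (pj i) - \<mu> i j\<bar>) + \<bar>\<gamma> k - \<mu> k j0\<bar>"

lemma Kc_nonneg: "Kc i \<ge> 0" unfolding Kc_def by (simp add: sum_nonneg add_nonneg_nonneg)

lemma R_bound: "\<bar>\<Sum>j\<in>CJ i. (\<mu> i (pj i) - \<mu> i j) * SX x j\<bar> \<le> (\<Sum>j\<in>CJ i. \<bar>\<mu> i (pj i) - \<mu> i j\<bar>) * H x i"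
proof -
  have "\<bar>\<Sum>j\<in>CJ i. (\<mu> i (pj i) - \<mu> i j) * SX x j\<bar> \<le> (\<Sum>j\<in>CJ i. \<bar>(\<mu> i (pj i) - \<mu> i j) * SX x j\<bar>)"
    by (rule sum_abs)
  also have "\<dots> \<le> (\<Sum>j\<in>CJ i. \<bar>\<mu> i (pj i) - \<mu> i j\<bar> * H x i)"
    using SX_bound by (intro sum_mono) (simp add: abs_mult mult_left_mono)
  finally show ?thesis by (simp add: sum_distrib_right)
qed

lemma H_nonneg: "H x i \<ge> 0" unfolding H_def by (intro sum_nonneg) auto

lemma key_ineq:
  assumes d: "d \<le> \<gamma> k" "\<forall>i. d \<le> \<mu> i (pj i)"
  shows "x $ i * Mx x i \<ge> d * (x $ i)\<^sup>2 - Kc i * \<bar>x $ i\<bar> * H x i"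
proof -
  define R where "R = (\<Sum>j\<in>CJ i. (\<mu> i (pj i) - \<mu> i j) * SX x j)"
  define C where "C = (\<Sum>j\<in>CJ i. \<bar>\<mu> i (pj i) - \<mu> i j\<bar>)"
  have RB: "\<bar>R\<bar> \<le> C * H x i" unfolding R_def C_def by (rule R_bound)
  have xR: "x $ i * R \<ge> - (\<bar>x $ i\<bar> * (C * H x i))"
  proof -
    have "\<bar>x $ i * R\<bar> \<le> \<bar>x $ i\<bar> * (C * H x i)" using RB by (simp add: abs_mult mult_left_mono)
    then show ?thesis by linarith
  qed
  have C0: "C \<ge> 0" unfolding C_def by (simp add: sum_nonneg)
  have Hn: "H x i \<ge> 0" by (rule H_nonneg)
  have KcC: "Kc i = C + \<bar>\<gamma> k - \<mu> k j0\<bar>" unfolding Kc_def C_def ..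
  have Mx: "Mx x i = \<mu> i (pj i) * ax x i + R + \<gamma> i * ppart (sx x) * uc i"
    unfolding R_def by (rule Mx_eq)
  show ?thesis
  proof (cases "i = k")
    case False
    then have "Mx x i = \<mu> i (pj i) * x $ i + R" unfolding Mx ax_def uc_def by simp
    then have "x $ i * Mx x i = \<mu> i (pj i) * (x $ i)\<^sup>2 + x $ i * R" by (simp add: algebra_simps power2_eq_square)
    moreover have "\<mu> i (pj i) * (x $ i)\<^sup>2 \<ge> d * (x $ i)\<^sup>2" using d(2) by (simp add: mult_right_mono)
    moreover have "\<bar>x $ i\<bar> * (C * H x i) \<le> Kc i * \<bar>x $ i\<bar> * H x i"
      unfolding KcC using Hn by (simp add: algebra_simps mult_right_mono)
    ultimately show ?thesis using xR by linarith
  next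
    case True
    have pjk: "\<mu> i (pj i) = \<mu> k j0" using True pj_k by simp
    define Z where "Z = (\<Sum>i'\<in>UNIV - {k}. x $ i')"
    have sxZ: "sx x = x $ k + Z" unfolding sx_def esum_def Z_def by (simp add: sum.remove)
    have ZH: "\<bar>Z\<bar> \<le> H x k"
    proof -
      have "\<bar>Z\<bar> \<le> (\<Sum>i'\<in>UNIV - {k}. \<bar>x $ i'\<bar>)" unfolding Z_def by (rule sum_abs)
      also have "\<dots> = H x k" unfolding H_def
      proof -
        have "(\<Sum>i'\<in>UNIV. if rank k < rank i' then \<bar>x $ i'\<bar> else 0) = (\<Sum>i'\<in>UNIV. if i' \<in> UNIV - {k} then \<bar>x $ i'\<bar> else 0)"
        proof (rule sum.cong[OF refl])
          fix i'
          have "rank k < rank i' \<longleftrightarrow> i' \<noteq> k" unfolding rank_def using dist_Inl_pos[of i'] by auto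
          then show "(if rank k < rank i' then \<bar>x $ i'\<bar> else 0) = (if i' \<in> UNIV - {k} then \<bar>x $ i'\<bar> else 0)" by simp
        qed
        also have "\<dots> = (\<Sum>i'\<in>UNIV - {k}. \<bar>x $ i'\<bar>)" by (subst sum.If_cases) (simp_all, rule sum.cong, auto)
        finally show "(\<Sum>i'\<in>UNIV - {k}. \<bar>x $ i'\<bar>) = (\<Sum>i'\<in>UNIV. if rank k < rank i' then \<bar>x $ i'\<bar> else 0)" by (metis Compl_eq_Diff_UNIV)
      qed
      finally show ?thesis .
    qed
    have Kk: "\<bar>x $ k\<bar> * (C * H x k) + \<bar>x $ k\<bar> * (\<bar>\<gamma> k - \<mu> k j0\<bar> * H x k) = Kc i * \<bar>x $ i\<bar> * H x i"
      using KcC True by (simp add: algebra_simps)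
    show ?thesis
    proof (cases "sx x \<ge> 0")
      case True2: True
      then have pp: "ppart (sx x) = x $ k + Z" unfolding ppart_def sxZ by simp
      have m: "Mx x i = \<gamma> k * x $ k + (\<gamma> k - \<mu> k j0) * Z + R"
        unfolding Mx ax_def uc_def pp using True pjk by (simp add: algebra_simps)
      have e: "x $ i * Mx x i = \<gamma> k * (x $ k)\<^sup>2 + x $ k * ((\<gamma> k - \<mu> k j0) * Z) + x $ k * R"
        unfolding m power2_eq_square using True by (simp add: algebra_simps)
      have t1: "\<gamma> k * (x $ k)\<^sup>2 \<ge> d * (x $ k)\<^sup>2" using d(1) by (simp add: mult_right_mono)
      have t2: "x $ k * ((\<gamma> k - \<mu> k j0) * Z) \<ge> - (\<bar>x $ k\<bar> * (\<bar>\<gamma> k - \<mu> k j0\<bar> * H x k))"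
      proof -
        have "\<bar>x $ k * ((\<gamma> k - \<mu> k j0) * Z)\<bar> \<le> \<bar>x $ k\<bar> * (\<bar>\<gamma> k - \<mu> k j0\<bar> * H x k)"
          using ZH by (simp add: abs_mult mult_left_mono)
        then show ?thesis by linarith
      qed
      show ?thesis using e t1 t2 xR Kk True by simp
    next
      case False2: False
      then have pp: "ppart (sx x) = 0" unfolding ppart_def by simp
      have m: "Mx x i = \<mu> k j0 * x $ k + R"
        unfolding Mx ax_def uc_def pp using True pjk by simp
      have e: "x $ i * Mx x i = \<mu> k j0 * (x $ k)\<^sup>2 + x $ k * R"
        unfolding m power2_eq_square using True by (simp add: algebra_simps)
      have t1: "\<mu> k j0 * (x $ k)\<^sup>2 \<ge> d * (x $ k)\<^sup>2" using d(2)[rule_format, of k] pj_k by (simp add: mult_right_mono)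
      have t3: "0 \<le> \<bar>x $ k\<bar> * (\<bar>\<gamma> k - \<mu> k j0\<bar> * H x k)" using H_nonneg by simp
      show ?thesis using e t1 t3 xR Kk True by simp
    qed
  qed
qed

end


lemma partial_of_deriv:
  fixes f :: "real^'n::finite \<Rightarrow> real"
  assumes "(f has_derivative (\<lambda>v. \<Sum>k\<in>UNIV. g k * v $ k)) (at x)"
  shows "partial i f x = g i"
proof -
  have l: "((\<lambda>t. x + t *\<^sub>R axis i 1) has_derivative (\<lambda>t. t *\<^sub>R axis i 1)) (at 0)"
    by (auto intro!: derivative_eq_intros)
  have f0: "(f has_derivative (\<lambda>v. \<Sum>k\<in>UNIV. g k * v $ k)) (at (x + (0::real) *\<^sub>R axis i 1))"
    using assms by simp
  have "((\<lambda>t. f (x + t *\<^sub>R axis i 1)) has_derivative (\<lambda>t. \<Sum>k\<in>UNIV. g k * (t *\<^sub>R axis i 1) $ k)) (at 0)"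
    by (rule has_derivative_compose[OF l f0])
  moreover have "(\<lambda>t. \<Sum>k\<in>UNIV. g k * (t *\<^sub>R axis i (1::real)) $ k) = (\<lambda>t. g i * t)"
  proof
    fix t :: real
    have "(\<Sum>k\<in>UNIV. g k * (t *\<^sub>R axis i (1::real)) $ k) = (\<Sum>k\<in>UNIV. if k = i then g i * t else 0)"
      by (intro sum.cong) (auto simp: axis_def)
    then show "(\<Sum>k\<in>UNIV. g k * (t *\<^sub>R axis i (1::real)) $ k) = g i * t" by simp
  qed
  ultimately have "((\<lambda>t. f (x + t *\<^sub>R axis i 1)) has_field_derivative g i) (at 0)"
    unfolding has_field_derivative_def by simp
  then show ?thesis unfolding partial_def by (rule DERIV_imp_deriv)
qed

lemma partial_fun:
  fixes f :: "real^'n::finite \<Rightarrow> real"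
  assumes "\<And>x. (f has_derivative (\<lambda>v. \<Sum>k\<in>UNIV. g k x * v $ k)) (at x)"
  shows "partial i f = g i"
  using partial_of_deriv[OF assms] by auto

lemma C2_coords:
  fixes f :: "real^'n::finite \<Rightarrow> real" and g :: "'n \<Rightarrow> real^'n \<Rightarrow> real"
    and c :: "'n \<Rightarrow> 'n \<Rightarrow> real^'n \<Rightarrow> real"
  assumes f: "\<And>x. (f has_derivative (\<lambda>v. \<Sum>k\<in>UNIV. g k x * v $ k)) (at x)"
    and g: "\<And>k x. (g k has_derivative (\<lambda>w. \<Sum>l\<in>UNIV. c k l x * w $ l)) (at x)"
    and c: "\<And>k l. continuous_on UNIV (c k l)"
  shows "C2 f"
proof -
  define P :: "'n \<Rightarrow> (real^'n) \<Rightarrow>\<^sub>L real" where "P k = Blinfun (\<lambda>v. v $ k)" for k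
  have P: "blinfun_apply (P k) v = v $ k" for k v
    unfolding P_def by (simp add: bounded_linear_Blinfun_apply bounded_linear_vec_nth)
  define T :: "'n \<Rightarrow> 'n \<Rightarrow> (real^'n) \<Rightarrow>\<^sub>L ((real^'n) \<Rightarrow>\<^sub>L real)" where
    "T k l = Blinfun (\<lambda>w. (w $ l) *\<^sub>R P k)" for k l
  have T: "blinfun_apply (T k l) w = (w $ l) *\<^sub>R P k" for k l w
    unfolding T_def
    by (rule bounded_linear_Blinfun_apply[THEN fun_cong])
       (intro bounded_linear_scaleR_const bounded_linear_vec_nth)
  define f' where "f' x = (\<Sum>k\<in>UNIV. g k x *\<^sub>R P k)" for x
  define f'' where "f'' x = (\<Sum>k\<in>UNIV. \<Sum>l\<in>UNIV. c k l x *\<^sub>R T k l)" for x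
  have f'a: "blinfun_apply (f' x) = (\<lambda>v. \<Sum>k\<in>UNIV. g k x * v $ k)" for x
    unfolding f'_def by (auto simp: blinfun.sum_left blinfun.scaleR_left P)
  have f''a: "blinfun_apply (f'' x) = (\<lambda>w. \<Sum>k\<in>UNIV. (\<Sum>l\<in>UNIV. c k l x * w $ l) *\<^sub>R P k)" for x
    unfolding f''_def
    by (auto simp: blinfun.sum_left blinfun.scaleR_left T scaleR_sum_left)
  have d1: "(f has_derivative blinfun_apply (f' x)) (at x)" for x unfolding f'a by (rule f)
  have d2: "(f' has_derivative blinfun_apply (f'' x)) (at x)" for x
    unfolding f''a f'_def[abs_def]
    by (intro has_derivative_sum has_derivative_scaleR_left g)
  have cc: "continuous_on UNIV f''"
    unfolding f''_def[abs_def]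
    by (intro continuous_on_sum continuous_on_scaleR c continuous_on_const)
  show ?thesis unfolding C2_def using d1 d2 cc by blast
qed



lemma deriv_glue:
  fixes fL fR fL' fR' :: "real \<Rightarrow> real"
  assumes fl: "\<And>t. (fL has_real_derivative fL' t) (at t)"
    and fr: "\<And>t. t > 0 \<Longrightarrow> (fR has_real_derivative fR' t) (at t)"
    and e0: "fL 1 = fR 1" and e1: "fL' 1 = fR' 1"
  shows "((\<lambda>t. if 1 \<le> t then fR t else fL t) has_real_derivative (if 1 \<le> t then fR' t else fL' t)) (at t)"
proof -
  consider "t < 1" | "t > 1" | "t = 1" by linarith
  then show ?thesis
  proof cases
    case 1
    have "((\<lambda>t. if 1 \<le> t then fR t else fL t) has_real_derivative fL' t) (at t)"
      by (rule has_field_derivative_transform_within_open[OF fl[of t], of "{..<1}"]) (use 1 in auto)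
    then show ?thesis using 1 by simp
  next
    case 2
    have "((\<lambda>t. if 1 \<le> t then fR t else fL t) has_real_derivative fR' t) (at t)"
      by (rule has_field_derivative_transform_within_open[OF fr[of t], of "{1<..}"]) (use 2 in auto)
    then show ?thesis using 2 by simp
  next
    case 3
    let ?g = "\<lambda>t. if 1 \<le> t then fR t else fL t"
    have L: "(?g has_real_derivative fL' 1) (at 1 within {..1})"
      by (rule has_field_derivative_transform_within[OF has_field_derivative_at_within[OF fl[of 1]], of 1])
         (use e0 in auto)
    have R: "(?g has_real_derivative fR' 1) (at 1 within {1..})"
      by (rule has_field_derivative_transform_within[OF has_field_derivative_at_within[OF fr[of 1]], of 1])
         auto
    have "((\<lambda>y. (?g y - ?g 1) / (y - 1)) \<longlongrightarrow> fR' 1) (at 1 within ({..1} \<union> {1..}))"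
      unfolding Lim_within_Un using L R e1 unfolding has_field_derivative_iff by simp
    moreover have "{..1} \<union> {1..} = (UNIV :: real set)" by auto
    ultimately have "(?g has_real_derivative fR' 1) (at 1)"
      unfolding has_field_derivative_iff by simp
    then show ?thesis using 3 by simp
  qed
qed

definition hh :: "real \<Rightarrow> real \<Rightarrow> real" where
  "hh p t = (if 1 \<le> t then t powr p else 1 + p * (t - 1) + p * (p - 1) / 2 * (t - 1)\<^sup>2)"
definition hh1 :: "real \<Rightarrow> real \<Rightarrow> real" where
  "hh1 p t = (if 1 \<le> t then p * t powr (p - 1) else p + p * (p - 1) * (t - 1))"
definition hh2 :: "real \<Rightarrow> real \<Rightarrow> real" where
  "hh2 p t = (if 1 \<le> t then p * (p - 1) * t powr (p - 2) else p * (p - 1))"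

lemma hh_deriv: "(hh p has_real_derivative hh1 p t) (at t)"
proof -
  have "((\<lambda>t. if 1 \<le> t then t powr p else 1 + p * (t - 1) + p * (p - 1) / 2 * (t - 1)\<^sup>2)
      has_real_derivative (if 1 \<le> t then p * t powr (p - 1) else p + p * (p - 1) * (t - 1))) (at t)"
  proof (rule deriv_glue)
    fix t :: real
    show "((\<lambda>t. 1 + p * (t - 1) + p * (p - 1) / 2 * (t - 1)\<^sup>2) has_real_derivative p + p * (p - 1) * (t - 1)) (at t)"
      by (auto intro!: derivative_eq_intros simp: field_simps power2_eq_square)
  next
    fix t :: real assume "t > 0"
    then show "((\<lambda>t. t powr p) has_real_derivative p * t powr (p - 1)) (at t)"
      by (rule has_real_derivative_powr)
  qed simp_all
  then show ?thesis unfolding hh_def[abs_def] hh1_def .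
qed

lemma hh1_deriv: "(hh1 p has_real_derivative hh2 p t) (at t)"
proof -
  have "((\<lambda>t. if 1 \<le> t then p * t powr (p - 1) else p + p * (p - 1) * (t - 1))
      has_real_derivative (if 1 \<le> t then p * (p - 1) * t powr (p - 2) else p * (p - 1))) (at t)"
  proof (rule deriv_glue)
    fix t :: real
    show "((\<lambda>t. p + p * (p - 1) * (t - 1)) has_real_derivative p * (p - 1)) (at t)"
      by (auto intro!: derivative_eq_intros)
  next
    fix t :: real assume t: "t > 0"
    have "((\<lambda>t. p * t powr (p - 1)) has_real_derivative p * ((p - 1) * t powr (p - 1 - 1))) (at t)"
      by (intro DERIV_cmult has_real_derivative_powr t)
    then show "((\<lambda>t. p * t powr (p - 1)) has_real_derivative p * (p - 1) * t powr (p - 2)) (at t)"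
      by (simp add: mult.assoc)
  qed simp_all
  then show ?thesis unfolding hh1_def[abs_def] hh2_def .
qed

lemma hh2_cont: "continuous_on UNIV (hh2 p)"
proof -
  have "continuous_on ({..1} \<union> {1..}) (\<lambda>t. if t \<le> 1 then p * (p - 1) else p * (p - 1) * t powr (p - 2))"
    by (intro continuous_on_cases) (auto intro!: continuous_intros)
  moreover have "(\<lambda>t. if t \<le> 1 then p * (p - 1) else p * (p - 1) * t powr (p - 2)) = hh2 p"
    unfolding hh2_def by (auto simp: fun_eq_iff)
  moreover have "{..1} \<union> {1..} = (UNIV :: real set)" by auto
  ultimately show ?thesis by metis
qed

lemma hh1_cont: "continuous_on UNIV (hh1 p)"
  using hh1_deriv by (meson DERIV_isCont continuous_at_imp_continuous_on)



context net begin

lemma wx_cont: "continuous_on UNIV (\<lambda>x. wx x u)"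
  by (cases u) (auto intro!: continuous_intros)

lemma Mx_cont: "continuous_on UNIV (\<lambda>x. Mx x i)"
proof -
  have "(\<lambda>x. Mx x i) = (\<lambda>x. \<mu> i (pj i) * ax x i + (\<Sum>j\<in>CJ i. (\<mu> i (pj i) - \<mu> i j) * SX x j)
   + \<gamma> i * ppart (sx x) * uc i)" using Mx_eq by auto
  moreover have "continuous_on UNIV (\<lambda>x. \<mu> i (pj i) * ax x i + (\<Sum>j\<in>CJ i. (\<mu> i (pj i) - \<mu> i j) * SX x j)
   + \<gamma> i * ppart (sx x) * uc i)"
    unfolding ax_def SX_def ppart_def sx_def esum_def
    by (intro continuous_intros wx_cont)
  ultimately show ?thesis by metis
qed

lemma inner_diag:
  fixes q :: "'i \<Rightarrow> real"
  shows "x \<bullet> ((\<chi> i j. if i = j then q i else 0) *v x) = (\<Sum>i\<in>UNIV. q i * (x $ i * x $ i))"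
proof -
  have "((\<chi> i j. if i = j then q i else 0) *v x) $ i = q i * x $ i" for i
  proof -
    have "((\<chi> i j. if i = j then q i else 0) *v x) $ i = (\<Sum>j\<in>UNIV. (if i = j then q i else 0) * x $ j)"
      unfolding matrix_vector_mult_def by simp
    also have "\<dots> = (\<Sum>j\<in>UNIV. if i = j then q i * x $ j else 0)"
      by (intro sum.cong) auto
    finally show ?thesis by simp
  qed
  then show ?thesis unfolding inner_vec_def by (simp add: mult_ac)
qed

lemma norm_sq: "(norm (x :: real^'i))\<^sup>2 = (\<Sum>i\<in>UNIV. x $ i * x $ i)"
  unfolding power2_norm_eq_inner inner_vec_def by simp

end



context net begin

lemma hh_cont: "continuous_on UNIV (hh p)"
  using hh_deriv by (meson DERIV_isCont continuous_at_imp_continuous_on)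

lemma final:
  assumes lam_pos: "\<forall>i. 0 < lam i"
  shows "\<forall>m::real. 1 \<le> m \<longrightarrow>
           (\<exists>(Q :: real^'i^'i) (V :: real^'i \<Rightarrow> real) \<kappa>0 \<kappa>1.
              (\<forall>i j. i \<noteq> j \<longrightarrow> Q $ i $ j = 0) \<and> (\<forall>i. 0 < Q $ i $ i) \<and>
              C2 V \<and>
              (\<forall>x. 1 \<le> norm x \<longrightarrow> V x = (x \<bullet> (Q *v x)) powr (m / 2)) \<and>
              0 < \<kappa>0 \<and> 0 < \<kappa>1 \<and>
              (\<forall>x. generator E \<mu> lam \<gamma> ell (uc, us) V x \<le> \<kappa>0 - \<kappa>1 * V x))"
proof -
  define d where "d = min (\<gamma> k) (Min (range (\<lambda>i. \<mu> i (pj i))))"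
  have dpos: "d > 0"
  proof -
    have "0 < Min (range (\<lambda>i. \<mu> i (pj i)))"
      using mu_pos pj(2) by (subst Min_gr_iff) auto
    then show ?thesis unfolding d_def using gam_k by simp
  qed
  have dk: "d \<le> \<gamma> k" unfolding d_def by simp
  have dmu: "\<forall>i. d \<le> \<mu> i (pj i)"
  proof
    fix i
    have "Min (range (\<lambda>i. \<mu> i (pj i))) \<le> \<mu> i (pj i)" by (rule Min_le) auto
    then show "d \<le> \<mu> i (pj i)" unfolding d_def by (rule min.coboundedI2)
  qed
  obtain q where q1: "\<forall>i. q i \<ge> 1" and qL: "\<forall>y m :: 'i \<Rightarrow> real.
     (\<forall>i. y i * m i \<ge> d * (y i)\<^sup>2 - Kc i * \<bar>y i\<bar> * (\<Sum>i'\<in>UNIV. if rank i < rank i' then \<bar>y i'\<bar> else 0))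
     \<longrightarrow> (\<Sum>i\<in>UNIV. q i * (y i * m i)) \<ge> d / 4 * (\<Sum>i\<in>UNIV. (y i)\<^sup>2)"
    using lyap_tri[where rank=rank and K=Kc and d=d] dpos Kc_nonneg by blast
  define c where "c = d / 4"
  have c0: "c > 0" unfolding c_def using dpos by simp
  have LY: "(\<Sum>i\<in>UNIV. q i * (x $ i * Mx x i)) \<ge> c * (\<Sum>i\<in>UNIV. x $ i * x $ i)" for x
  proof -
    have "(\<Sum>i\<in>UNIV. q i * (x $ i * Mx x i)) \<ge> d / 4 * (\<Sum>i\<in>UNIV. (x $ i)\<^sup>2)"
      using qL[rule_format, of "\<lambda>i. x $ i" "\<lambda>i. Mx x i"] key_ineq[OF dk dmu] unfolding H_def by blast
    then show ?thesis unfolding c_def by (simp add: power2_eq_square)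
  qed
  show ?thesis
  proof (intro allI impI)
    fix m :: real assume m1: "1 \<le> m"
    define p where "p = m / 2"
    have p0: "p > 0" unfolding p_def using m1 by simp
    define Q :: "real^'i^'i" where "Q = (\<chi> i j. if i = j then q i else 0)"
    define qf where "qf x = (\<Sum>i\<in>UNIV. q i * (x $ i * x $ i))" for x :: "real^'i"
    define V where "V x = hh p (qf x)" for x
    define g where "g i x = hh1 p (qf x) * (2 * q i * x $ i)" for i x
    define cc where "cc i l x = hh2 p (qf x) * (2 * q l * x $ l) * (2 * q i * x $ i)
        + (if i = l then hh1 p (qf x) * (2 * q i) else 0)" for i l x
    have qf_d: "(qf has_derivative (\<lambda>v. \<Sum>k\<in>UNIV. (2 * q k * x $ k) * v $ k)) (at x)" for x
    proof -
      have vn: "((\<lambda>x. x $ k) has_derivative (\<lambda>v. v $ k)) (at x)" for k :: 'i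
        by (rule bounded_linear_imp_has_derivative[OF bounded_linear_vec_nth])
      have "(qf has_derivative (\<lambda>v. \<Sum>k\<in>UNIV. q k * (x $ k * v $ k + v $ k * x $ k))) (at x)"
        unfolding qf_def[abs_def]
        by (intro has_derivative_sum has_derivative_mult_right has_derivative_mult vn)
      then show ?thesis
        by (rule has_derivative_eq_rhs) (auto simp: fun_eq_iff algebra_simps intro!: sum.cong)
    qed
    have qf_c: "continuous_on UNIV qf"
      unfolding qf_def[abs_def] by (intro continuous_intros)
    have V_d: "(V has_derivative (\<lambda>v. \<Sum>k\<in>UNIV. g k x * v $ k)) (at x)" for x
    proof -
      have "(V has_derivative (\<lambda>v. (\<Sum>k\<in>UNIV. (2 * q k * x $ k) * v $ k) * hh1 p (qf x))) (at x)"
        unfolding V_def[abs_def] by (rule DERIV_compose_FDERIV[OF hh_deriv qf_d])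
      then show ?thesis
        by (rule has_derivative_eq_rhs) (auto simp: fun_eq_iff g_def sum_distrib_left sum_distrib_right mult_ac)
    qed
    have g_d: "(g i has_derivative (\<lambda>w. \<Sum>l\<in>UNIV. cc i l x * w $ l)) (at x)" for i x
    proof -
      have h1: "((\<lambda>x. hh1 p (qf x)) has_derivative (\<lambda>v. (\<Sum>k\<in>UNIV. (2 * q k * x $ k) * v $ k) * hh2 p (qf x))) (at x)"
        by (rule DERIV_compose_FDERIV[OF hh1_deriv qf_d])
      have h2: "((\<lambda>x. 2 * q i * x $ i) has_derivative (\<lambda>v. 2 * q i * v $ i)) (at x)"
        by (intro has_derivative_mult_right bounded_linear_imp_has_derivative[OF bounded_linear_vec_nth])
      have "(g i has_derivative (\<lambda>v. hh1 p (qf x) * (2 * q i * v $ i)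
           + (\<Sum>k\<in>UNIV. (2 * q k * x $ k) * v $ k) * hh2 p (qf x) * (2 * q i * x $ i))) (at x)"
        unfolding g_def[abs_def] using has_derivative_mult[OF h1 h2] by (simp add: mult_ac)
      moreover have "(\<lambda>v. hh1 p (qf x) * (2 * q i * v $ i)
           + (\<Sum>k\<in>UNIV. (2 * q k * x $ k) * v $ k) * hh2 p (qf x) * (2 * q i * x $ i))
          = (\<lambda>w. \<Sum>l\<in>UNIV. cc i l x * w $ l)"
      proof
        fix w :: "real^'i"
        have "(\<Sum>l\<in>UNIV. cc i l x * w $ l) = (\<Sum>l\<in>UNIV. hh2 p (qf x) * (2 * q l * x $ l) * (2 * q i * x $ i) * w $ l)
             + (\<Sum>l\<in>UNIV. if i = l then hh1 p (qf x) * (2 * q i) * w $ l else 0)"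
          unfolding cc_def sum.distrib[symmetric] by (intro sum.cong) (auto simp: algebra_simps)
        also have "(\<Sum>l\<in>UNIV. if i = l then hh1 p (qf x) * (2 * q i) * w $ l else 0) = hh1 p (qf x) * (2 * q i) * w $ i"
          by simp
        also have "(\<Sum>l\<in>UNIV. hh2 p (qf x) * (2 * q l * x $ l) * (2 * q i * x $ i) * w $ l)
            = (\<Sum>k\<in>UNIV. (2 * q k * x $ k) * w $ k) * hh2 p (qf x) * (2 * q i * x $ i)"
        proof -
          have "(\<Sum>l\<in>UNIV. hh2 p (qf x) * (2 * q l * x $ l) * (2 * q i * x $ i) * w $ l)
              = (\<Sum>k\<in>UNIV. (2 * q k * x $ k) * w $ k * (hh2 p (qf x) * (2 * q i * x $ i)))"
            by (intro sum.cong) (simp_all add: mult_ac)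
          also have "\<dots> = (\<Sum>k\<in>UNIV. (2 * q k * x $ k) * w $ k) * (hh2 p (qf x) * (2 * q i * x $ i))"
            by (rule sum_distrib_right[symmetric])
          finally show ?thesis by (simp add: mult.assoc)
        qed
        finally show "hh1 p (qf x) * (2 * q i * w $ i)
           + (\<Sum>k\<in>UNIV. (2 * q k * x $ k) * w $ k) * hh2 p (qf x) * (2 * q i * x $ i)
          = (\<Sum>l\<in>UNIV. cc i l x * w $ l)" by (simp add: mult_ac)
      qed
      ultimately show ?thesis by simp
    qed
    have hh1c: "continuous_on UNIV (\<lambda>x. hh1 p (qf x))"
      by (rule continuous_on_compose2[OF hh1_cont qf_c]) auto
    have hh2c: "continuous_on UNIV (\<lambda>x. hh2 p (qf x))"
      by (rule continuous_on_compose2[OF hh2_cont qf_c]) auto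
    have hhc: "continuous_on UNIV V"
      unfolding V_def[abs_def] by (rule continuous_on_compose2[OF hh_cont qf_c]) auto
    have cc_c: "continuous_on UNIV (cc i l)" for i l
      unfolding cc_def[abs_def] by (cases "i = l") (simp_all, (intro continuous_intros hh1c hh2c)+)
    have g_c: "continuous_on UNIV (g i)" for i
      unfolding g_def[abs_def] by (intro continuous_intros hh1c)
    have C2V: "C2 V" by (rule C2_coords[OF V_d g_d cc_c])
    have pV: "partial i V = g i" for i by (rule partial_fun[OF V_d])
    have pg: "partial i (g i) = cc i i" for i by (rule partial_fun[OF g_d])
    define gen where "gen x = (\<Sum>i\<in>UNIV. lam i * cc i i x) + (\<Sum>i\<in>UNIV. (ell i - Mx x i) * g i x)" for x
    have gen_eq: "generator E \<mu> lam \<gamma> ell (uc, us) V x = gen x" for x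
      unfolding generator_def gen_def pV pg drift_eq ..
    have qf_ge: "qf x \<ge> (norm x)\<^sup>2" for x
      unfolding norm_sq qf_def
    proof (rule sum_mono)
      fix i
      have "1 * (x $ i * x $ i) \<le> q i * (x $ i * x $ i)" using q1 by (intro mult_right_mono) auto
      then show "x $ i * x $ i \<le> q i * (x $ i * x $ i)" by simp
    qed
    have Vform: "V x = (x \<bullet> (Q *v x)) powr (m / 2)" if "1 \<le> norm x" for x
    proof -
      have "1 \<le> (norm x)\<^sup>2" using that by (simp add: one_le_power)
      then have "1 \<le> qf x" using qf_ge[of x] by linarith
      then show ?thesis unfolding V_def hh_def Q_def inner_diag qf_def[symmetric] p_def by simp
    qed
    define Qm where "Qm = (\<Sum>i\<in>UNIV. q i)"
    have q0: "q i \<ge> 0" for i using q1 by (meson order_trans zero_le_one)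
    have qQm: "q i \<le> Qm" for i unfolding Qm_def using q0 by (intro member_le_sum) auto
    have Qm1: "Qm \<ge> 1" using qQm[of undefined] spec[OF q1, of undefined] by linarith
    define A where "A = (\<Sum>i\<in>UNIV. lam i * (4 * p * \<bar>p - 1\<bar> * Qm + 2 * p * q i))"
    have A0: "A \<ge> 0" unfolding A_def
    proof (intro sum_nonneg)
      fix i
      have "0 \<le> 4 * p * \<bar>p - 1\<bar> * Qm" using p0 Qm1 by simp
      moreover have "0 \<le> 2 * p * q i" using p0 q0[of i] by simp
      ultimately show "0 \<le> lam i * (4 * p * \<bar>p - 1\<bar> * Qm + 2 * p * q i)"
        using lam_pos by (simp add: less_imp_le)
    qed
    define L where "L = (\<Sum>i\<in>UNIV. q i * \<bar>ell i\<bar>)"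
    have L0: "L \<ge> 0" unfolding L_def using q0 by (intro sum_nonneg mult_nonneg_nonneg) auto
    define \<kappa>1 where "\<kappa>1 = p * c / Qm"
    have k1: "\<kappa>1 > 0" unfolding \<kappa>1_def using p0 c0 Qm1 by simp
    define R where "R = max 1 ((A + 2 * p * L) / (p * c))"
    have big: "gen x + \<kappa>1 * V x \<le> 0" if nx: "R \<le> norm x" for x
    proof -
      define r where "r = norm x"
      define r2 where "r2 = (\<Sum>i\<in>UNIV. x $ i * x $ i)"
      have r1: "r \<ge> 1" using nx unfolding r_def R_def by simp
      have r2r: "r2 = r * r" unfolding r2_def r_def using norm_sq[of x] by (simp add: power2_eq_square)
      define t where "t = qf x"
      have "1 \<le> (norm x)\<^sup>2" using r1 unfolding r_def by (simp add: one_le_power)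
      then have t1: "t \<ge> 1" using qf_ge[of x] unfolding t_def by linarith
      have t0: "t > 0" using t1 by simp
      have tQ: "t \<le> Qm * r2" unfolding t_def qf_def r2_def sum_distrib_left
        by (intro sum_mono mult_right_mono qQm) simp
      define w where "w = t powr (p - 1)"
      have w0: "w > 0" unfolding w_def using t0 by simp
      have tp: "t powr p = w * t"
      proof -
        have "t powr p = t powr ((p - 1) + 1)" by simp
        also have "\<dots> = w * t" unfolding w_def powr_add using t0 by simp
        finally show ?thesis .
      qed
      have tp2: "t powr (p - 2) * t = w"
      proof -
        have "t powr (p - 1) = t powr ((p - 2) + 1)" by simp
        also have "\<dots> = t powr (p - 2) * t" unfolding powr_add using t0 by simp
        finally show ?thesis unfolding w_def by simp
      qed
      have H1: "hh1 p t = p * w" unfolding hh1_def w_def using t1 by simp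
      have H2: "hh2 p t = p * (p - 1) * t powr (p - 2)" unfolding hh2_def using t1 by simp
      have Vt: "V x = w * t" unfolding V_def hh_def t_def[symmetric] using t1 tp by simp
      have term_i: "q i * (x $ i * x $ i) \<le> t" for i
        unfolding t_def qf_def using q0 by (intro member_le_sum[where f="\<lambda>i. q i * (x $ i * x $ i)"]) auto
      have E1: "(\<Sum>i\<in>UNIV. lam i * cc i i x) \<le> A * w"
      proof -
        have "(\<Sum>i\<in>UNIV. lam i * cc i i x) \<le> (\<Sum>i\<in>UNIV. lam i * (4 * p * \<bar>p - 1\<bar> * Qm + 2 * p * q i) * w)"
        proof (rule sum_mono)
          fix i
          have a: "q i * q i * (x $ i * x $ i) \<le> Qm * t"
          proof -
            have "0 \<le> q i * (x $ i * x $ i)" using q0[of i] by simp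
            then have "q i * (q i * (x $ i * x $ i)) \<le> Qm * t"
              using mult_mono[OF qQm[of i] term_i[of i]] Qm1 by simp
            then show ?thesis by (simp add: mult.assoc)
          qed
          have b: "p * (p - 1) * t powr (p - 2) * (q i * q i * (x $ i * x $ i)) \<le> p * \<bar>p - 1\<bar> * t powr (p - 2) * (Qm * t)"
          proof -
            have "p * (p - 1) * t powr (p - 2) * (q i * q i * (x $ i * x $ i)) \<le> p * \<bar>p - 1\<bar> * t powr (p - 2) * (q i * q i * (x $ i * x $ i))"
              using p0 by (intro mult_right_mono) (auto intro!: mult_left_mono)
            also have "\<dots> \<le> p * \<bar>p - 1\<bar> * t powr (p - 2) * (Qm * t)"
              using a p0 by (intro mult_left_mono) auto
            finally show ?thesis .
          qed
          have "cc i i x = 4 * (p * (p - 1) * t powr (p - 2) * (q i * q i * (x $ i * x $ i))) + 2 * p * q i * w"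
            unfolding cc_def t_def[symmetric] H1 H2 by (simp add: algebra_simps)
          also have "\<dots> \<le> 4 * (p * \<bar>p - 1\<bar> * t powr (p - 2) * (Qm * t)) + 2 * p * q i * w"
            using b by simp
          also have "\<dots> = (4 * p * \<bar>p - 1\<bar> * Qm + 2 * p * q i) * w"
            using tp2 by (simp add: algebra_simps)
          finally have "cc i i x \<le> (4 * p * \<bar>p - 1\<bar> * Qm + 2 * p * q i) * w" .
          then show "lam i * cc i i x \<le> lam i * (4 * p * \<bar>p - 1\<bar> * Qm + 2 * p * q i) * w"
            using lam_pos by (simp add: mult_left_mono mult.assoc)
        qed
        also have "\<dots> = A * w" unfolding A_def by (simp add: sum_distrib_right)
        finally show ?thesis .
      qed
      have E2: "(\<Sum>i\<in>UNIV. (ell i - Mx x i) * g i x) = 2 * p * w * ((\<Sum>i\<in>UNIV. q i * x $ i * ell i) - (\<Sum>i\<in>UNIV. q i * (x $ i * Mx x i)))"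
        unfolding g_def t_def[symmetric] H1
        by (simp add: sum_distrib_left sum_subtractf[symmetric] algebra_simps)
      have Lb: "(\<Sum>i\<in>UNIV. q i * x $ i * ell i) \<le> L * r"
      proof -
        have "(\<Sum>i\<in>UNIV. q i * x $ i * ell i) \<le> (\<Sum>i\<in>UNIV. q i * \<bar>ell i\<bar> * r)"
        proof (rule sum_mono)
          fix i
          have "q i * x $ i * ell i \<le> \<bar>q i * x $ i * ell i\<bar>" by simp
          also have "\<dots> = q i * \<bar>ell i\<bar> * \<bar>x $ i\<bar>" using q0[of i] by (simp add: abs_mult)
          also have "\<dots> \<le> q i * \<bar>ell i\<bar> * r" unfolding r_def using q1
            using q0[of i] by (intro mult_left_mono component_le_norm_cart) auto
          finally show "q i * x $ i * ell i \<le> q i * \<bar>ell i\<bar> * r" .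
        qed
        then show ?thesis unfolding L_def by (simp add: sum_distrib_right)
      qed
      have Mb: "(\<Sum>i\<in>UNIV. q i * (x $ i * Mx x i)) \<ge> c * r2" unfolding r2_def by (rule LY)
      have E2b: "(\<Sum>i\<in>UNIV. (ell i - Mx x i) * g i x) \<le> 2 * p * w * (L * r - c * r2)"
        unfolding E2 using Lb Mb p0 w0 by (intro mult_left_mono) auto
      have E3: "\<kappa>1 * V x \<le> p * c * r2 * w"
      proof -
        have "\<kappa>1 * V x = \<kappa>1 * w * t" unfolding Vt by simp
        also have "\<dots> \<le> \<kappa>1 * w * (Qm * r2)" using tQ k1 w0 by (intro mult_left_mono) auto
        also have "\<dots> = p * c * r2 * w" unfolding \<kappa>1_def using Qm1 by (simp add: field_simps)
        finally show ?thesis .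
      qed
      have lin: "A + 2 * p * L * r \<le> p * c * r2"
      proof -
        have "A + 2 * p * L * r \<le> (A + 2 * p * L) * r" using A0 r1 by (simp add: algebra_simps mult_left_mono[of 1 r A, simplified])
        also have "\<dots> \<le> (p * c * R) * r"
        proof -
          have "(A + 2 * p * L) / (p * c) \<le> R" unfolding R_def by simp
          then have "A + 2 * p * L \<le> p * c * R" using p0 c0 by (simp add: field_simps)
          then show ?thesis using r1 by (intro mult_right_mono) auto
        qed
        also have "\<dots> \<le> (p * c * r) * r" using nx p0 c0 r1 unfolding r_def
          by (intro mult_right_mono mult_left_mono) auto
        finally show ?thesis unfolding r2r by (simp add: mult_ac)
      qed
      have "gen x + \<kappa>1 * V x \<le> A * w + 2 * p * w * (L * r - c * r2) + p * c * r2 * w"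
        unfolding gen_def using E1 E2b E3 by linarith
      also have "\<dots> = w * (A + 2 * p * L * r - p * c * r2)" by (simp add: algebra_simps)
      also have "\<dots> \<le> 0" using lin w0 by (simp add: mult_nonneg_nonpos)
      finally show ?thesis .
    qed
    have Fc: "continuous_on UNIV (\<lambda>x. gen x + \<kappa>1 * V x)"
      unfolding gen_def by (intro continuous_intros cc_c g_c Mx_cont hhc)
    have "compact ((\<lambda>x. gen x + \<kappa>1 * V x) ` cball 0 R)"
      by (intro compact_continuous_image continuous_on_subset[OF Fc]) auto
    then obtain B where B0: "B > 0" and B: "\<forall>y\<in>(\<lambda>x. gen x + \<kappa>1 * V x) ` cball 0 R. norm y \<le> B"
      using compact_imp_bounded bounded_pos by metis
    have allb: "gen x + \<kappa>1 * V x \<le> B" for x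
    proof (cases "norm x \<le> R")
      case True
      then have "norm (gen x + \<kappa>1 * V x) \<le> B" using B by auto
      then show ?thesis by simp
    next
      case False
      then show ?thesis using big[of x] B0 by simp
    qed
    show "\<exists>(Q :: real^'i^'i) (V :: real^'i \<Rightarrow> real) \<kappa>0 \<kappa>1.
              (\<forall>i j. i \<noteq> j \<longrightarrow> Q $ i $ j = 0) \<and> (\<forall>i. 0 < Q $ i $ i) \<and>
              C2 V \<and>
              (\<forall>x. 1 \<le> norm x \<longrightarrow> V x = (x \<bullet> (Q *v x)) powr (m / 2)) \<and>
              0 < \<kappa>0 \<and> 0 < \<kappa>1 \<and>
              (\<forall>x. generator E \<mu> lam \<gamma> ell (uc, us) V x \<le> \<kappa>0 - \<kappa>1 * V x)"
    proof (intro exI conjI allI impI)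
      show "\<And>i j. i \<noteq> j \<Longrightarrow> Q $ i $ j = 0" unfolding Q_def by simp
      show "\<And>i. 0 < Q $ i $ i" unfolding Q_def using q1 by (simp add: less_le_trans[OF zero_less_one])
      show "C2 V" by (rule C2V)
      show "\<And>x. 1 \<le> norm x \<Longrightarrow> V x = (x \<bullet> (Q *v x)) powr (m / 2)" by (rule Vform)
      show "0 < B" by (rule B0)
      show "0 < \<kappa>1" by (rule k1)
      show "\<And>x. generator E \<mu> lam \<gamma> ell (uc, us) V x \<le> B - \<kappa>1 * V x"
        using allb unfolding gen_eq by (simp add: algebra_simps)
    qed
  qed
qed

end


theorem mainTheorem7:
  fixes E :: "'i::finite \<Rightarrow> 'j::finite \<Rightarrow> bool"
    and \<mu> :: "'i \<Rightarrow> 'j \<Rightarrow> real"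
    and lam \<gamma> ell :: "'i \<Rightarrow> real"
  assumes tree: "bip_tree E"
    and lam_pos: "\<forall>i. 0 < lam i"
    and gam_nonneg: "\<forall>i. 0 \<le> \<gamma> i"
    and mu_pos: "\<forall>i j. E i j \<longrightarrow> 0 < \<mu> i j"
    and mu_zero: "\<forall>i j. \<not> E i j \<longrightarrow> \<mu> i j = 0"
    and gam_nonzero: "\<exists>i. \<gamma> i \<noteq> 0"
  shows "\<exists>ubar \<in> Uset. \<forall>m::real. 1 \<le> m \<longrightarrow>
           (\<exists>(Q :: real^'i^'i) (V :: real^'i \<Rightarrow> real) \<kappa>0 \<kappa>1.
              (\<forall>i j. i \<noteq> j \<longrightarrow> Q $ i $ j = 0) \<and> (\<forall>i. 0 < Q $ i $ i) \<and>
              C2 V \<and>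
              (\<forall>x. 1 \<le> norm x \<longrightarrow> V x = (x \<bullet> (Q *v x)) powr (m / 2)) \<and>
              0 < \<kappa>0 \<and> 0 < \<kappa>1 \<and>
              (\<forall>x. generator E \<mu> lam \<gamma> ell ubar V x \<le> \<kappa>0 - \<kappa>1 * V x))"
proof -
  obtain k where gk: "\<gamma> k \<noteq> 0" using gam_nonzero by blast
  then have gk': "\<gamma> k > 0" using gam_nonneg by (simp add: less_le)
  obtain j0 where Ekj0: "E k j0"
  proof -
    obtain vs where vs: "vs \<noteq> []" "hd vs = Inl k" "last vs = (Inr undefined :: 'i + 'j)" "is_walk E vs"
      using tree unfolding bip_tree_def bconnected_def by blast
    have len: "Suc 0 < length vs"
    proof (rule ccontr)
      assume "\<not> Suc 0 < length vs"
      then have "length vs = 1" using vs(1) by (cases vs) auto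
      then have "hd vs = last vs" by (cases vs) auto
      then show False using vs by simp
    qed
    then have b: "badj E (vs ! 0) (vs ! Suc 0)" using vs(4) unfolding is_walk_def by blast
    have "vs ! 0 = Inl k" using vs(1,2) by (simp add: hd_conv_nth)
    with b show ?thesis using that by (elim badj_cases) auto
  qed
  interpret net E j0 \<mu> \<gamma> ell k
    by unfold_locales (use tree mu_pos mu_zero gk' Ekj0 in auto)
  show ?thesis using ubar_U final[OF lam_pos] by blast
qed


end
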